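(* Assume $\mu<0$ and conditions (C1) and (C2). Then for every $T\ge1$, $$\mu^*_T:=\mathbb E^*_{\pi^*}(f(X_1,Y_{1+T}))<\mu^*:=\pi^*(f).$$
   Context: Let $E$ be a finite set and $P,Q$ irreducible aperiodic stochastic $E\times E$ matrices with invariant probability vectors $\pi_P,\pi_Q$; $\pi=\pi_P\otimes\pi_Q$. Let $f:E\times E\to\mathbb Z$ with gcd of its values equal to $1$; $\nu(f)=\sum f\,d\nu$; $\mu=\pi(f)$. A cycle w.r.t. $P$ is a sequence $x_1,\dots,x_n$ with $P(x_k,x_{k+1})>0$ for all $k$, indices mod $n$. (C1): for some $n\ge1$ there are cycles $x_1,\dots,x_n$ w.r.t. $P$ and $y_1,\dots,y_n$ w.r.t. $Q$ with $\sum_kf(x_k,y_k)>0$. (C2): for every $T\ge1$ there are $n\ge1$ and cycles $x_1,\dots,x_n$ w.r.t. $P$ and $y_1,\dots,y_n$ w.r.t. $Q$ with $\sum_kf(x_k,y_k)\ne\sum_kf(x_k,y_{k+T\bmod n})$. Let $\Phi(\theta)_{(x,y),(x',y')}=e^{\theta f(x',y')}P_{x,x'}Q_{y,y'}$, $\varphi(\theta)$ its spectral radius, $\theta^*>0$ the unique positive solution of $\varphi(\theta)=1$, $r^*$ a positive right eigenvector of $\Phi(\theta^* )$ for eigenvalue 1, $R^*_{(x,y),(x',y')}=\frac{r^*(x',y')}{r^*(x,y)}\Phi(\theta^* )_{(x,y),(x',y')}$, and $\pi^*$ the invariant probability vector of $R^*$. $\mathbb P^*_{\pi^*}$ (expectation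 $\mathbb E^*_{\pi^*}$) is the law under which $(X_n,Y_n)_{n\ge0}$ is a stationary Markov chain on $E^2$ with transition matrix $R^*$. *)

theory Defs
  imports Complex_Main "HOL-Library.FuncSet"
begin

definition stochastic :: "('s::finite \<Rightarrow> 's \<Rightarrow> real) \<Rightarrow> bool" where
  "stochastic A \<longleftrightarrow> (\<forall>x y. 0 \<le> A x y) \<and> (\<forall>x. (\<Sum>y\<in>UNIV. A x y) = 1)"

fun matpow :: "('s::finite \<Rightarrow> 's \<Rightarrow> real) \<Rightarrow> nat \<Rightarrow> 's \<Rightarrow> 's \<Rightarrow> real" where
  "matpow A 0 = (\<lambda>x y. if x = y then 1 else 0)"
| "matpow A (Suc n) = (\<lambda>x z. \<Sum>y\<in>UNIV. matpow A n x y * A y z)"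

definition irreducible_mat :: "('s::finite \<Rightarrow> 's \<Rightarrow> real) \<Rightarrow> bool" where
  "irreducible_mat A \<longleftrightarrow> (\<forall>x y. \<exists>n\<ge>1. matpow A n x y > 0)"

definition aperiodic_mat :: "('s::finite \<Rightarrow> 's \<Rightarrow> real) \<Rightarrow> bool" where
  "aperiodic_mat A \<longleftrightarrow> (\<forall>x. Gcd {n::nat. n \<ge> 1 \<and> matpow A n x x > 0} = 1)"

definition invariant_prob :: "('s::finite \<Rightarrow> 's \<Rightarrow> real) \<Rightarrow> ('s \<Rightarrow> real) \<Rightarrow> bool" where
  "invariant_prob A p \<longleftrightarrow> (\<forall>x. 0 \<le> p x) \<and> (\<Sum>x\<in>UNIV. p x) = 1
      \<and> (\<forall>y. (\<Sum>x\<in>UNIV. p x * A x y) = p y)"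

definition is_cycle :: "('s \<Rightarrow> 's \<Rightarrow> real) \<Rightarrow> nat \<Rightarrow> (nat \<Rightarrow> 's) \<Rightarrow> bool" where
  "is_cycle A n x \<longleftrightarrow> n \<ge> 1 \<and> (\<forall>k<n. A (x k) (x ((k + 1) mod n)) > 0)"

definition eigenvalue_mat :: "('s::finite \<Rightarrow> 's \<Rightarrow> real) \<Rightarrow> complex \<Rightarrow> bool" where
  "eigenvalue_mat A c \<longleftrightarrow> (\<exists>v::'s \<Rightarrow> complex. v \<noteq> (\<lambda>_. 0) \<and>
      (\<forall>x. (\<Sum>y\<in>UNIV. complex_of_real (A x y) * v y) = c * v x))"

definition spectral_radius_mat :: "('s::finite \<Rightarrow> 's \<Rightarrow> real) \<Rightarrow> real" where
  "spectral_radius_mat A = Sup {cmod c | c. eigenvalue_mat A c}"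

definition Phi :: "('e::finite \<Rightarrow> 'e \<Rightarrow> real) \<Rightarrow> ('e \<Rightarrow> 'e \<Rightarrow> real) \<Rightarrow> ('e \<times> 'e \<Rightarrow> int)
    \<Rightarrow> real \<Rightarrow> ('e \<times> 'e) \<Rightarrow> ('e \<times> 'e) \<Rightarrow> real" where
  "Phi P Q f \<theta> = (\<lambda>(x, y) (x', y'). exp (\<theta> * of_int (f (x', y'))) * P x x' * Q y y')"

text \<open>Doob transform R of a matrix with positive right eigenvector r for eigenvalue 1.\<close>
definition doob :: "('s \<Rightarrow> 's \<Rightarrow> real) \<Rightarrow> ('s \<Rightarrow> real) \<Rightarrow> 's \<Rightarrow> 's \<Rightarrow> real" where
  "doob A r = (\<lambda>z z'. r z' / r z * A z z')"

text \<open>Expectation of g(Z_i, Z_j) (i, j \<le> m) for the Markov chain (Z_n) with initial law p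
  and transition matrix R, computed from the law of (Z_0,...,Z_m):
  P(Z_0 = w 0, ..., Z_m = w m) = p (w 0) * prod_{k<m} R (w k) (w (k+1)).\<close>
definition markov_expect2 :: "('s::finite \<Rightarrow> real) \<Rightarrow> ('s \<Rightarrow> 's \<Rightarrow> real) \<Rightarrow> nat
    \<Rightarrow> nat \<Rightarrow> nat \<Rightarrow> ('s \<Rightarrow> 's \<Rightarrow> real) \<Rightarrow> real" where
  "markov_expect2 p R m i j g =
     (\<Sum>w\<in>PiE {..m} (\<lambda>_. UNIV). p (w 0) * (\<Prod>k<m. R (w k) (w (Suc k))) * g (w i) (w j))"

end

theory Submission
  imports Defs
begin

definition Ls :: "nat \<Rightarrow> 'a list set" where "Ls n = {xs. length xs = n}"

lemma finite_Ls[simp]: "finite (Ls n :: ('s::finite) list set)"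
proof -
  have "Ls n = {xs::'s list. set xs \<subseteq> UNIV \<and> length xs = n}" by (auto simp: Ls_def)
  then show ?thesis using finite_lists_length_eq[of "UNIV::'s set" n] by simp
qed

lemma card_Ls: "card (Ls n :: ('s::finite) list set) = card (UNIV::'s set) ^ n"
proof -
  have "Ls n = {xs::'s list. set xs \<subseteq> UNIV \<and> length xs = n}" by (auto simp: Ls_def)
  then show ?thesis using card_lists_length_eq[of "UNIV::'s set" n] by simp
qed

lemma Ls_mem[simp]: "xs \<in> Ls n \<longleftrightarrow> length xs = n" by (simp add: Ls_def)

lemma sum_Ls_append:
  "(\<Sum>w\<in>Ls (n+m). g w) = (\<Sum>u\<in>Ls n. \<Sum>v\<in>Ls m. g (u@v))" for g :: "'s::finite list \<Rightarrow> 'b::comm_monoid_add"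
proof -
  have bij: "bij_betw (\<lambda>x. fst x @ snd x) (Ls n \<times> Ls m) (Ls (n+m) :: 's list set)"
    unfolding bij_betw_def
  proof
    show "inj_on (\<lambda>x. fst x @ snd x) (Ls n \<times> Ls m :: ('s list \<times> 's list) set)"
      by (auto simp: inj_on_def append_eq_append_conv)
    show "(\<lambda>x. fst x @ snd x) ` (Ls n \<times> Ls m) = (Ls (n + m) :: 's list set)"
    proof
      show "(\<lambda>x. fst x @ snd x) ` (Ls n \<times> Ls m) \<subseteq> (Ls (n + m) :: 's list set)" by auto
      show "(Ls (n + m) :: 's list set) \<subseteq> (\<lambda>x. fst x @ snd x) ` (Ls n \<times> Ls m)"
      proof
        fix w :: "'s list" assume "w \<in> Ls (n+m)"
        then show "w \<in> (\<lambda>x. fst x @ snd x) ` (Ls n \<times> Ls m)"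
          by (intro image_eqI[of _ _ "(take n w, drop n w)"]) auto
      qed
    qed
  qed
  have "(\<Sum>w\<in>Ls (n+m). g w) = (\<Sum>x\<in>Ls n \<times> Ls m. g (fst x @ snd x))"
    using sum.reindex_bij_betw[OF bij, of g] by simp
  also have "\<dots> = (\<Sum>u\<in>Ls n. \<Sum>v\<in>Ls m. g (u@v))"
    by (simp add: sum.cartesian_product split_def)
  finally show ?thesis .
qed

lemma Ls_1: "Ls (Suc 0) = (\<lambda>z. [z]) ` UNIV"
  by (auto simp: Ls_def length_Suc_conv)

lemma sum_Ls_1: "(\<Sum>w\<in>Ls (Suc 0). g w) = (\<Sum>z\<in>UNIV. g [z])" for g :: "'s::finite list \<Rightarrow> 'b::comm_monoid_add"
  by (simp add: Ls_1 sum.reindex inj_on_def)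

lemma sum_Ls_Suc_cons:
  "(\<Sum>w\<in>Ls (Suc n). g w) = (\<Sum>z\<in>UNIV. \<Sum>v\<in>Ls n. g (z#v))" for g :: "'s::finite list \<Rightarrow> 'b::comm_monoid_add"
  using sum_Ls_append[where n="Suc 0" and m=n and g=g] by (simp add: sum_Ls_1)

lemma sum_Ls_Suc_snoc:
  "(\<Sum>w\<in>Ls (Suc n). g w) = (\<Sum>v\<in>Ls n. \<Sum>z\<in>UNIV. g (v@[z]))" for g :: "'s::finite list \<Rightarrow> 'b::comm_monoid_add"
  using sum_Ls_append[where n=n and m="Suc 0" and g=g] by (simp add: sum_Ls_1)

fun Mw :: "('s \<Rightarrow> 's \<Rightarrow> real) \<Rightarrow> 's list \<Rightarrow> real" where
  "Mw R [] = 1" | "Mw R [z] = 1" | "Mw R (z#z'#v) = R z z' * Mw R (z'#v)"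

lemma Mw_append: "Mw R (u @ z # v) = Mw R (u @ [z]) * Mw R (z # v)"
  by (induction R u rule: Mw.induct) (auto simp: mult.assoc)

lemma Mw_snoc: "Mw R (u @ [z, z']) = Mw R (u @ [z]) * R z z'"
  using Mw_append[of R u z "[z']"] by simp

lemma Mw_map_upt: "Mw R (map g [a..<a + Suc m]) = (\<Prod>k<m. R (g (a+k)) (g (a + Suc k)))"
proof (induction m arbitrary: a)
  case 0 then show ?case by simp
next
  case (Suc m)
  have e: "[a..<a + Suc (Suc m)] = a # [Suc a..<Suc a + Suc m]"
    by (simp add: upt_conv_Cons)
  have e2: "[Suc a..<Suc a + Suc m] = Suc a # [Suc (Suc a)..<Suc a + Suc m]"
    by (simp add: upt_conv_Cons)
  have "Mw R (map g [a..<a + Suc (Suc m)]) = R (g a) (g (Suc a)) * Mw R (map g [Suc a..<Suc a + Suc m])"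
    unfolding e by (simp only: e2 list.map Mw.simps)
  also have "\<dots> = R (g a) (g (Suc a)) * (\<Prod>k<m. R (g (Suc a+k)) (g (Suc a + Suc k)))"
    using Suc[of "Suc a"] by simp
  also have "\<dots> = (\<Prod>k<Suc m. R (g (a+k)) (g (a + Suc k)))"
    by (subst prod.lessThan_Suc_shift) simp
  finally show ?case .
qed

definition proc :: "('s::finite list \<Rightarrow> real) \<Rightarrow> bool" where
  "proc p \<longleftrightarrow> p [] = 1 \<and> (\<forall>w. (\<Sum>z\<in>UNIV. p (w@[z])) = p w)
     \<and> (\<forall>w. (\<Sum>z\<in>UNIV. p (z#w)) = p w) \<and> (\<forall>w. 0 \<le> p w)"

lemma proc_marg_end: "proc p \<Longrightarrow> (\<Sum>v\<in>Ls k. p (u@v)) = p u"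
proof (induction k)
  case 0 then show ?case by (simp add: Ls_def)
next
  case (Suc k)
  have "(\<Sum>v\<in>Ls (Suc k). p (u@v)) = (\<Sum>v\<in>Ls k. \<Sum>z\<in>UNIV. p (u@v@[z]))"
    by (simp add: sum_Ls_Suc_snoc)
  also have "\<dots> = (\<Sum>v\<in>Ls k. p (u@v))"
  proof -
    have "\<And>v. (\<Sum>z\<in>UNIV. p ((u@v)@[z])) = p (u@v)" using Suc.prems unfolding proc_def by blast
    then show ?thesis by simp
  qed
  finally show ?case using Suc by simp
qed

lemma proc_marg_front: "proc p \<Longrightarrow> (\<Sum>v\<in>Ls k. p (v@u)) = p u"
proof (induction k)
  case 0 then show ?case by (simp add: Ls_def)
next
  case (Suc k)
  have "(\<Sum>v\<in>Ls (Suc k). p (v@u)) = (\<Sum>z\<in>UNIV. \<Sum>v\<in>Ls k. p (z#v@u))"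
    by (simp add: sum_Ls_Suc_cons)
  also have "\<dots> = (\<Sum>v\<in>Ls k. \<Sum>z\<in>UNIV. p (z#v@u))" by (rule sum.swap)
  also have "\<dots> = (\<Sum>v\<in>Ls k. p (v@u))"
  proof -
    have "\<And>v. (\<Sum>z\<in>UNIV. p (z#(v@u))) = p (v@u)" using Suc.prems unfolding proc_def by blast
    then show ?thesis by simp
  qed
  finally show ?case using Suc by simp
qed

lemma proc_nonneg: "proc p \<Longrightarrow> 0 \<le> p w" by (simp add: proc_def)

lemma proc_total: "proc p \<Longrightarrow> (\<Sum>v\<in>Ls k. p v) = 1"
  using proc_marg_end[where p=p and k=k and u="[]"] by (simp add: proc_def)

lemma proc_le_prefix: "proc p \<Longrightarrow> p (u@v) \<le> p u"
proof -
  assume p: "proc p"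
  have "p (u@v) \<le> (\<Sum>v'\<in>Ls (length v). p (u@v'))"
    by (rule member_le_sum[where f="\<lambda>v'. p (u@v')"]) (auto simp: proc_nonneg[OF p])
  then show ?thesis using proc_marg_end[OF p] by simp
qed

lemma proc_le_suffix: "proc p \<Longrightarrow> p (u@v) \<le> p v"
proof -
  assume p: "proc p"
  have "p (u@v) \<le> (\<Sum>u'\<in>Ls (length u). p (u'@v))"
    by (rule member_le_sum[where f="\<lambda>u'. p (u'@v)"]) (auto simp: proc_nonneg[OF p])
  then show ?thesis using proc_marg_front[OF p] by simp
qed

lemma proc_window:
  assumes p: "proc p"
  shows "(\<Sum>w\<in>Ls (a+c+b). p w * h (take c (drop a w))) = (\<Sum>u\<in>Ls c. p u * h u)"
proof -
  have "(\<Sum>w\<in>Ls (a+(c+b)). p w * h (take c (drop a w)))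
      = (\<Sum>x\<in>Ls a. \<Sum>u\<in>Ls c. \<Sum>y\<in>Ls b. p (x@u@y) * h (take c (drop a (x@u@y))))"
    by (simp add: sum_Ls_append)
  also have "\<dots> = (\<Sum>x\<in>Ls a. \<Sum>u\<in>Ls c. \<Sum>y\<in>Ls b. p (x@u@y) * h u)"
    by (intro sum.cong refl) simp
  also have "\<dots> = (\<Sum>u\<in>Ls c. \<Sum>x\<in>Ls a. \<Sum>y\<in>Ls b. p (x@u@y) * h u)"
    by (rule sum.swap)
  also have "\<dots> = (\<Sum>u\<in>Ls c. (\<Sum>x\<in>Ls a. \<Sum>y\<in>Ls b. p ((x@u)@y)) * h u)"
    by (simp add: sum_distrib_right)
  also have "\<dots> = (\<Sum>u\<in>Ls c. p u * h u)"
  proof -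
    have "(\<Sum>y\<in>Ls b. p ((x@u)@y)) = p (x@u)" for x u by (rule proc_marg_end[OF p])
    then have "\<And>x u. (\<Sum>y\<in>Ls b. p (x@u@y)) = p (x@u)" by simp
    then show ?thesis by (simp add: proc_marg_front[OF p])
  qed
  finally show ?thesis by (simp add: add.assoc)
qed

lemma ln_ge_one_minus_inv: "0 < x \<Longrightarrow> 1 - 1 / x \<le> ln (x::real)"
  using ln_le_minus_one[of "1/x"] by (simp add: ln_div)

lemma ln_gt_one_minus_inv: "0 < x \<Longrightarrow> x \<noteq> 1 \<Longrightarrow> 1 - 1 / x < ln (x::real)"
proof -
  assume x: "0 < x" "x \<noteq> 1"
  define y where "y = 1 / x"
  have y: "0 < y" "y \<noteq> 1" using x by (auto simp: y_def)
  have "ln y = 2 * ln (sqrt y)" using y by (simp add: ln_sqrt)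
  also have "\<dots> \<le> 2 * (sqrt y - 1)" using ln_le_minus_one[of "sqrt y"] y by simp
  also have "\<dots> < y - 1"
  proof -
    have "sqrt y \<noteq> 1" using y by simp
    then have "0 < (sqrt y - 1)^2" by simp
    then show ?thesis using y by (simp add: power2_eq_square algebra_simps)
  qed
  finally have "ln y < y - 1" .
  then show ?thesis using x by (simp add: y_def ln_div)
qed

lemma term_ge: "0 \<le> a \<Longrightarrow> 0 \<le> b \<Longrightarrow> (0 < a \<Longrightarrow> 0 < b) \<Longrightarrow> a - b \<le> a * ln (a / (b::real))"
proof (cases "a = 0")
  case False
  assume ab: "0 \<le> a" "0 \<le> b" "0 < a \<Longrightarrow> 0 < b"
  then have a: "0 < a" and b: "0 < b" using False by auto
  have "1 - 1 / (a/b) \<le> ln (a/b)" by (rule ln_ge_one_minus_inv) (use a b in simp)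
  then have "a * (1 - b/a) \<le> a * ln (a/b)" using a by (intro mult_left_mono) auto
  then show ?thesis using a by (simp add: algebra_simps)
qed simp

lemma term_eq: "0 \<le> a \<Longrightarrow> 0 \<le> b \<Longrightarrow> (0 < a \<Longrightarrow> 0 < b) \<Longrightarrow> a * ln (a / (b::real)) = a - b \<Longrightarrow> a = b"
proof (cases "a = 0")
  case False
  assume ab: "0 \<le> a" "0 \<le> b" "0 < a \<Longrightarrow> 0 < b" and eq: "a * ln (a / b) = a - b"
  then have a: "0 < a" and b: "0 < b" using False by auto
  show "a = b"
  proof (rule ccontr)
    assume "a \<noteq> b"
    then have "a/b \<noteq> 1" using b by simp
    then have "1 - 1 / (a/b) < ln (a/b)" by (intro ln_gt_one_minus_inv) (use a b in auto)
    then have "a * (1 - b/a) < a * ln (a/b)" using a by (intro mult_strict_left_mono) auto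
    then show False using a eq by (simp add: algebra_simps)
  qed
qed simp

lemma log_sum:
  assumes fin: "finite I" and a: "\<And>i. i \<in> I \<Longrightarrow> 0 \<le> a i" and b: "\<And>i. i \<in> I \<Longrightarrow> 0 \<le> b i"
    and ab: "\<And>i. i \<in> I \<Longrightarrow> 0 < a i \<Longrightarrow> 0 < b i"
  shows "(\<Sum>i\<in>I. a i) * ln ((\<Sum>i\<in>I. a i) / (\<Sum>i\<in>I. b i)) \<le> (\<Sum>i\<in>I. a i * ln (a i / (b i::real)))"
proof (cases "(\<Sum>i\<in>I. a i) = 0")
  case True
  then have "\<forall>i\<in>I. a i = 0" using sum_nonneg_eq_0_iff[OF fin] a by blast
  then show ?thesis by simp
next
  case False
  define A where "A = (\<Sum>i\<in>I. a i)"
  define B where "B = (\<Sum>i\<in>I. b i)"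
  have "0 \<le> A" unfolding A_def using a by (simp add: sum_nonneg)
  then have A: "0 < A" using False unfolding A_def by simp
  obtain i0 where "i0 \<in> I" "a i0 \<noteq> 0" using False by (metis sum.neutral)
  then have "0 < b i0" using a ab by force
  moreover have "b i0 \<le> B" unfolding B_def using b \<open>i0 \<in> I\<close> fin
    by (intro member_le_sum) auto
  ultimately have B: "0 < B" by simp
  have step: "a i * ln (A/B) + a i - b i * (A/B) \<le> a i * ln (a i / b i)" if i: "i \<in> I" for i
  proof (cases "a i = 0")
    case True then show ?thesis using b[OF i] A B by simp
  next
    case False
    then have ai: "0 < a i" using a[OF i] by simp
    then have bi: "0 < b i" using ab[OF i] by simp
    have x: "0 < (a i / b i) / (A/B)" using ai bi A B by simp
    have "1 - 1 / ((a i / b i) / (A/B)) \<le> ln ((a i / b i) / (A/B))"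
      by (rule ln_ge_one_minus_inv[OF x])
    also have "\<dots> = ln (a i / b i) - ln (A/B)" using ai bi A B by (simp add: ln_div ln_mult)
    finally have "a i * (1 - 1 / ((a i / b i) / (A/B))) \<le> a i * (ln (a i / b i) - ln (A/B))"
      using ai by (intro mult_left_mono) auto
    moreover have "a i * (1 - 1 / ((a i / b i) / (A/B))) = a i - b i * (A/B)"
      using ai bi A B by (simp add: field_simps)
    moreover have "a i * (ln (a i / b i) - ln (A/B)) = a i * ln (a i / b i) - a i * ln (A/B)"
      by (simp add: right_diff_distrib)
    ultimately show ?thesis by linarith
  qed
  have "(\<Sum>i\<in>I. a i * ln (A/B) + a i - b i * (A/B)) \<le> (\<Sum>i\<in>I. a i * ln (a i / b i))"
    by (rule sum_mono) (rule step)
  moreover have "(\<Sum>i\<in>I. a i * ln (A/B) + a i - b i * (A/B)) = A * ln (A/B) + A - B * (A/B)"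
    unfolding A_def B_def by (simp add: sum.distrib sum_subtractf sum_distrib_right sum_divide_distrib)
  moreover have "B * (A/B) = A" using B by simp
  ultimately show ?thesis unfolding A_def B_def by simp
qed

locale stoch =
  fixes R :: "'s::finite \<Rightarrow> 's \<Rightarrow> real"
  assumes R_nonneg: "\<And>z z'. R z z' \<ge> 0"
    and R_row: "\<And>z. (\<Sum>z'\<in>UNIV. R z z') = 1"
begin

lemma Mw_nonneg: "Mw R w \<ge> 0"
  by (induction w rule: induct_list012) (auto intro: mult_nonneg_nonneg R_nonneg)

lemma Mw_sum: "(\<Sum>v\<in>Ls k. Mw R (z # v)) = 1"
proof (induction k)
  case 0 then show ?case by (simp add: Ls_def)
next
  case (Suc k)
  have "(\<Sum>v\<in>Ls (Suc k). Mw R (z # v)) = (\<Sum>v\<in>Ls k. \<Sum>z'\<in>UNIV. Mw R (z # v @ [z']))"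
    by (rule sum_Ls_Suc_snoc)
  also have "\<dots> = (\<Sum>v\<in>Ls k. Mw R (z # v))"
  proof (rule sum.cong[OF refl])
    fix v
    have "Mw R (z # v @ [z']) = Mw R (z # v) * R (last (z#v)) z'" for z'
      using Mw_snoc[of R "butlast (z#v)" "last (z#v)" z']
      by (metis append_butlast_last_id append_Cons append_assoc append_Nil list.distinct(1))
    then show "(\<Sum>z'\<in>UNIV. Mw R (z # v @ [z'])) = Mw R (z # v)"
      by (simp add: sum_distrib_left[symmetric] R_row)
  qed
  finally show ?case using Suc by simp
qed

definition okp :: "('s list \<Rightarrow> real) \<Rightarrow> bool" where
  "okp p \<longleftrightarrow> proc p \<and> (\<forall>w. 0 < p w \<longrightarrow> 0 < Mw R w)"

definition eR :: "('s list \<Rightarrow> real) \<Rightarrow> real" where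
  "eR p = (\<Sum>z\<in>UNIV. \<Sum>z'\<in>UNIV. p [z,z'] * ln (R z z'))"

definition Ec :: "('s list \<Rightarrow> real) \<Rightarrow> nat \<Rightarrow> real" where
  "Ec p k = (\<Sum>w\<in>Ls (Suc k). p w * ln (p w / (p [hd w] * Mw R w)))"

definition Hn :: "('s list \<Rightarrow> real) \<Rightarrow> nat \<Rightarrow> real" where
  "Hn p n = (\<Sum>w\<in>Ls n. p w * ln (p w))"

lemma mult_ln_split: "0 \<le> a \<Longrightarrow> 0 \<le> b \<Longrightarrow> (0 < c \<Longrightarrow> 0 < a*b) \<Longrightarrow> 0 \<le> c \<Longrightarrow>
   c * ln (a*b) = c * ln a + c * ln (b::real)"
proof (cases "c = 0")
  case False
  assume h: "0 \<le> a" "0 \<le> b" "0 < c \<Longrightarrow> 0 < a*b" "0 \<le> c"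
  then have "0 < a*b" using False by simp
  then have "0 < a" "0 < b" using h by (auto simp: zero_less_mult_iff)
  then show ?thesis by (simp add: ln_mult distrib_left)
qed simp

lemma LM:
  assumes p: "okp p"
  shows "(\<Sum>w\<in>Ls (Suc k). p w * ln (Mw R w)) = real k * eR p"
proof (induction k)
  case 0 then show ?case by (simp add: sum_Ls_1)
next
  case (Suc k)
  have pp: "proc p" using p by (simp add: okp_def)
  have m1: "(\<Sum>v\<in>Ls k. p ([z,z']@v)) = p [z,z']" for z z' by (rule proc_marg_end[OF pp])
  have m2: "(\<Sum>z\<in>UNIV. p (z#(z'#v))) = p (z'#v)" for z' v using pp unfolding proc_def by blast
  have sw: "(\<Sum>z\<in>UNIV. \<Sum>z'\<in>UNIV. \<Sum>v\<in>Ls k. p (z#(z'#v)) * ln (Mw R (z'#v)))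
      = (\<Sum>z'\<in>UNIV. \<Sum>v\<in>Ls k. (\<Sum>z\<in>UNIV. p (z#(z'#v))) * ln (Mw R (z'#v)))"
    by (subst sum.swap) (simp add: sum_distrib_right sum.swap[where A=UNIV and B="Ls k"])
  have "(\<Sum>w\<in>Ls (Suc (Suc k)). p w * ln (Mw R w))
      = (\<Sum>z\<in>UNIV. \<Sum>z'\<in>UNIV. \<Sum>v\<in>Ls k. p (z#z'#v) * ln (Mw R (z#z'#v)))"
    by (simp add: sum_Ls_Suc_cons)
  also have "\<dots> = (\<Sum>z\<in>UNIV. \<Sum>z'\<in>UNIV. \<Sum>v\<in>Ls k.
        p (z#z'#v) * ln (R z z') + p (z#z'#v) * ln (Mw R (z'#v)))"
  proof (intro sum.cong refl)
    fix z z' v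
    show "p (z#z'#v) * ln (Mw R (z#z'#v)) = p (z#z'#v) * ln (R z z') + p (z#z'#v) * ln (Mw R (z'#v))"
      unfolding Mw.simps
      by (rule mult_ln_split) (use p R_nonneg Mw_nonneg proc_nonneg[OF pp] in \<open>auto simp: okp_def\<close>)
  qed
  also have "\<dots> = (\<Sum>z\<in>UNIV. \<Sum>z'\<in>UNIV. (\<Sum>v\<in>Ls k. p ([z,z']@v)) * ln (R z z'))
        + (\<Sum>z\<in>UNIV. \<Sum>z'\<in>UNIV. \<Sum>v\<in>Ls k. p (z#(z'#v)) * ln (Mw R (z'#v)))"
    by (simp add: sum.distrib sum_distrib_right)
  also have "\<dots> = eR p + (\<Sum>z'\<in>UNIV. \<Sum>v\<in>Ls k. p (z'#v) * ln (Mw R (z'#v)))"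
    unfolding sw by (simp only: m1 m2 eR_def)
  also have "(\<Sum>z'\<in>UNIV. \<Sum>v\<in>Ls k. p (z'#v) * ln (Mw R (z'#v))) = real k * eR p"
    using Suc by (simp add: sum_Ls_Suc_cons)
  finally show ?case by (simp add: algebra_simps)
qed

lemma hd_marg: "okp p \<Longrightarrow> p (z#v) \<le> p [z]"
  using proc_le_prefix[of p "[z]" v] by (simp add: okp_def)

lemma Ec_eq:
  assumes p: "okp p"
  shows "Ec p k = Hn p (Suc k) - Hn p (Suc 0) - real k * eR p"
proof -
  have pp: "proc p" using p by (simp add: okp_def)
  have "Ec p k = (\<Sum>w\<in>Ls (Suc k). p w * ln (p w) - p w * ln (p [hd w]) - p w * ln (Mw R w))"
    unfolding Ec_def
  proof (intro sum.cong refl)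
    fix w :: "'s list" assume w: "w \<in> Ls (Suc k)"
    show "p w * ln (p w / (p [hd w] * Mw R w)) = p w * ln (p w) - p w * ln (p [hd w]) - p w * ln (Mw R w)"
    proof (cases "p w = 0")
      case False
      then have pw: "0 < p w" using proc_nonneg[OF pp, of w] by simp
      obtain z v where wz: "w = z # v" using w by (cases w) auto
      have "0 < p [hd w]" using hd_marg[OF p, of z v] pw wz by simp
      moreover have "0 < Mw R w" using p pw by (simp add: okp_def)
      ultimately show ?thesis using pw by (simp add: ln_div ln_mult algebra_simps)
    qed simp
  qed
  also have "\<dots> = Hn p (Suc k) - (\<Sum>w\<in>Ls (Suc k). p w * ln (p [hd w])) - real k * eR p"
    by (simp add: sum_subtractf Hn_def LM[OF p])
  also have "(\<Sum>w\<in>Ls (Suc k). p w * ln (p [hd w])) = Hn p (Suc 0)"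
  proof -
    have "(\<Sum>w\<in>Ls (Suc k). p w * ln (p [hd w])) = (\<Sum>z\<in>UNIV. (\<Sum>v\<in>Ls k. p ([z]@v)) * ln (p [z]))"
      by (simp only: sum_Ls_Suc_cons sum_distrib_right append_Cons append_Nil list.sel)
    also have "\<dots> = Hn p (Suc 0)"
    proof -
      have m1: "(\<Sum>v\<in>Ls k. p ([z]@v)) = p [z]" for z by (rule proc_marg_end[OF pp])
      show ?thesis by (simp only: m1 Hn_def sum_Ls_1)
    qed
    finally show ?thesis .
  qed
  finally show ?thesis .
qed

lemma Ec_0: "okp p \<Longrightarrow> Ec p 0 = 0"
  unfolding Ec_def sum_Ls_1 by (intro sum.neutral) auto

lemma Ec_superadd:
  assumes p: "okp p"
  shows "Ec p a + Ec p b \<le> Ec p (a + b)"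
proof -
  have pp: "proc p" using p by (simp add: okp_def)
  have nn: "\<And>w. 0 \<le> p w" using proc_nonneg[OF pp] .
  define A1 where "A1 u' z = ln (p (u'@[z]) / (p [hd (u'@[z])] * Mw R (u'@[z])))" for u' z
  define A2 where "A2 u' z v = ln (p (u'@z#v) / (p (u'@[z]) * Mw R (z#v)))" for u' z v
  have split: "p (u'@z#v) * ln (p (u'@z#v) / (p [hd (u'@z#v)] * Mw R (u'@z#v)))
      = p (u'@z#v) * A1 u' z + p (u'@z#v) * A2 u' z v" for u' z v
  proof (cases "p (u'@z#v) = 0")
    case False
    then have pW: "0 < p (u'@z#v)" using nn[of "u'@z#v"] by simp
    have "p (u'@z#v) \<le> p (u'@[z])" using proc_le_prefix[OF pp, of "u'@[z]" v] by simp
    then have pU: "0 < p (u'@[z])" using pW by simp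
    have h: "hd (u'@z#v) = hd (u'@[z])" by (cases u') auto
    have "p (u'@[z]) \<le> p [hd (u'@[z])]"
      using proc_le_prefix[OF pp, of "[hd (u'@[z])]" "tl (u'@[z])"] by (cases u') auto
    then have p0: "0 < p [hd (u'@[z])]" using pU by simp
    have MW: "0 < Mw R (u'@z#v)" using p pW by (simp add: okp_def)
    then have "0 < Mw R (u'@[z]) * Mw R (z#v)" by (simp add: Mw_append[symmetric])
    then have MU: "0 < Mw R (u'@[z])" and MV: "0 < Mw R (z#v)"
      using Mw_nonneg[of "u'@[z]"] Mw_nonneg[of "z#v"] by (auto simp: zero_less_mult_iff)
    define W where "W = p (u'@z#v)"
    define U where "U = p (u'@[z])"
    define P0 where "P0 = p [hd (u'@[z])]"
    define MU' where "MU' = Mw R (u'@[z])"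
    define MV' where "MV' = Mw R (z#v)"
    have pos: "0 < W" "0 < U" "0 < P0" "0 < MU'" "0 < MV'"
      using pW pU p0 MU MV by (simp_all add: W_def U_def P0_def MU'_def MV'_def)
    have "W / (P0 * (MU' * MV')) = (U / (P0 * MU')) * (W / (U * MV'))"
      using pos by (simp add: field_simps)
    moreover have "ln ((U / (P0 * MU')) * (W / (U * MV'))) = ln (U / (P0 * MU')) + ln (W / (U * MV'))"
      by (rule ln_mult_pos) (use pos in simp_all)
    ultimately have "ln (W / (P0 * (MU' * MV'))) = ln (U / (P0 * MU')) + ln (W / (U * MV'))"
      by simp
    then have "W * ln (W / (P0 * (MU' * MV'))) = W * ln (U / (P0 * MU')) + W * ln (W / (U * MV'))"
      by (simp add: distrib_left)
    then show ?thesis unfolding A1_def A2_def h Mw_append[of R u' z v]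
      by (simp add: W_def U_def P0_def MU'_def MV'_def)
  qed simp
  have e1: "Ls (Suc (a+b)) = Ls (a + Suc b)" by simp
  have "Ec p (a+b) = (\<Sum>u'\<in>Ls a. \<Sum>z\<in>UNIV. \<Sum>v\<in>Ls b.
      p (u'@z#v) * ln (p (u'@z#v) / (p [hd (u'@z#v)] * Mw R (u'@z#v))))"
    unfolding Ec_def e1 sum_Ls_append sum_Ls_Suc_cons ..
  also have "\<dots> = (\<Sum>u'\<in>Ls a. \<Sum>z\<in>UNIV. \<Sum>v\<in>Ls b.
      p (u'@z#v) * A1 u' z + p (u'@z#v) * A2 u' z v)"
    by (simp only: split)
  also have "\<dots> = (\<Sum>u'\<in>Ls a. \<Sum>z\<in>UNIV. (\<Sum>v\<in>Ls b. p ((u'@[z])@v)) * A1 u' z)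
      + (\<Sum>u'\<in>Ls a. \<Sum>z\<in>UNIV. \<Sum>v\<in>Ls b. p (u'@z#v) * A2 u' z v)"
    by (simp add: sum.distrib sum_distrib_right)
  also have "(\<Sum>u'\<in>Ls a. \<Sum>z\<in>UNIV. (\<Sum>v\<in>Ls b. p ((u'@[z])@v)) * A1 u' z) = Ec p a"
    by (simp only: proc_marg_end[OF pp] Ec_def sum_Ls_Suc_snoc A1_def)
  also have "(\<Sum>u'\<in>Ls a. \<Sum>z\<in>UNIV. \<Sum>v\<in>Ls b. p (u'@z#v) * A2 u' z v)
      = (\<Sum>z\<in>UNIV. \<Sum>v\<in>Ls b. \<Sum>u'\<in>Ls a. p (u'@z#v) * A2 u' z v)"
    by (subst sum.swap) (simp add: sum.swap[where A="Ls a" and B="Ls b"])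
  finally have eq: "Ec p (a+b) = Ec p a + (\<Sum>z\<in>UNIV. \<Sum>v\<in>Ls b. \<Sum>u'\<in>Ls a. p (u'@z#v) * A2 u' z v)" .
  have "Ec p b \<le> (\<Sum>z\<in>UNIV. \<Sum>v\<in>Ls b. \<Sum>u'\<in>Ls a. p (u'@z#v) * A2 u' z v)"
    unfolding Ec_def sum_Ls_Suc_cons
  proof (intro sum_mono)
    fix z v
    have sa: "(\<Sum>u'\<in>Ls a. p (u'@z#v)) = p (z#v)" by (rule proc_marg_front[OF pp])
    have sb: "(\<Sum>u'\<in>Ls a. p (u'@[z]) * Mw R (z#v)) = p [z] * Mw R (z#v)"
      by (simp add: sum_distrib_right[symmetric] proc_marg_front[OF pp])
    have "(\<Sum>u'\<in>Ls a. p (u'@z#v)) * ln ((\<Sum>u'\<in>Ls a. p (u'@z#v)) / (\<Sum>u'\<in>Ls a. p (u'@[z]) * Mw R (z#v)))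
        \<le> (\<Sum>u'\<in>Ls a. p (u'@z#v) * ln (p (u'@z#v) / (p (u'@[z]) * Mw R (z#v))))"
    proof (rule log_sum)
      fix u' assume "u' \<in> Ls a" "0 < p (u'@z#v)"
      then have pW: "0 < p (u'@z#v)" by simp
      have "p (u'@z#v) \<le> p (u'@[z])" using proc_le_prefix[OF pp, of "u'@[z]" v] by simp
      then have pU: "0 < p (u'@[z])" using pW by simp
      have MW: "0 < Mw R (u'@z#v)" using p pW by (simp add: okp_def)
      then have "0 < Mw R (u'@[z]) * Mw R (z#v)" by (simp add: Mw_append[symmetric])
      then have MV: "0 < Mw R (z#v)"
        using Mw_nonneg[of "u'@[z]"] Mw_nonneg[of "z#v"] by (auto simp: zero_less_mult_iff)
      show "0 < p (u'@[z]) * Mw R (z#v)" using pU MV by simp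
    qed (auto simp: nn Mw_nonneg)
    then show "p (z#v) * ln (p (z#v) / (p [hd (z#v)] * Mw R (z#v)))
        \<le> (\<Sum>u'\<in>Ls a. p (u'@z#v) * A2 u' z v)"
      unfolding sa sb A2_def by simp
  qed
  then show ?thesis using eq by simp
qed

lemma Ec_mult: "okp p \<Longrightarrow> real j * Ec p k \<le> Ec p (j * k)"
proof (induction j)
  case 0 then show ?case by (simp add: Ec_0)
next
  case (Suc j)
  have "Ec p (j*k) + Ec p k \<le> Ec p (j*k + k)" by (rule Ec_superadd[OF Suc.prems])
  then show ?case using Suc by (simp add: algebra_simps)
qed

lemma Ec_bounded_nonpos:
  assumes p: "okp p" and bd: "\<And>k. Ec p k \<le> C"
  shows "Ec p k \<le> 0"
proof (rule ccontr)
  assume "\<not> Ec p k \<le> 0"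
  then have pos: "0 < Ec p k" by simp
  obtain j :: nat where "C / Ec p k < real j" using reals_Archimedean2 by blast
  then have "C < real j * Ec p k" using pos by (simp add: field_simps)
  also have "\<dots> \<le> Ec p (j*k)" by (rule Ec_mult[OF p])
  finally show False using bd[of "j*k"] by simp
qed

lemma Ec_markov:
  assumes p: "okp p" and E: "Ec p k \<le> 0" and v: "length v = k"
  shows "p (z#v) = p [z] * Mw R (z#v)"
proof -
  have pp: "proc p" using p by (simp add: okp_def)
  have nn: "\<And>w. 0 \<le> p w" using proc_nonneg[OF pp] .
  define t where "t z v = p (z#v) * ln (p (z#v) / (p [z] * Mw R (z#v))) - (p (z#v) - p [z] * Mw R (z#v))" for z v
  have cond: "0 < p [z] * Mw R (z#v)" if "0 < p (z#v)" for z v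
  proof -
    have "0 < p [z]" using hd_marg[OF p, of z v] that by simp
    moreover have "0 < Mw R (z#v)" using p that by (simp add: okp_def)
    ultimately show ?thesis by simp
  qed
  have t_nn: "0 \<le> t z v" for z v
    unfolding t_def using term_ge[OF nn mult_nonneg_nonneg[OF nn Mw_nonneg] cond] by simp
  have "(\<Sum>z\<in>UNIV. \<Sum>v\<in>Ls k. p (z#v) - p [z] * Mw R (z#v)) = 0"
  proof (rule sum.neutral, rule ballI)
    fix z
    have "(\<Sum>v\<in>Ls k. p ([z]@v)) = p [z]" by (rule proc_marg_end[OF pp])
    then show "(\<Sum>v\<in>Ls k. p (z#v) - p [z] * Mw R (z#v)) = 0"
      by (simp add: sum_subtractf sum_distrib_left[symmetric] Mw_sum)
  qed
  then have "(\<Sum>z\<in>UNIV. \<Sum>v\<in>Ls k. t z v) = Ec p k"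
    unfolding t_def Ec_def sum_Ls_Suc_cons by (simp add: sum_subtractf)
  then have "(\<Sum>z\<in>UNIV. \<Sum>v\<in>Ls k. t z v) = 0"
  proof -
    have "0 \<le> (\<Sum>z\<in>UNIV. \<Sum>v\<in>Ls k. t z v)" by (intro sum_nonneg t_nn)
    then show ?thesis using E \<open>(\<Sum>z\<in>UNIV. \<Sum>v\<in>Ls k. t z v) = Ec p k\<close> by linarith
  qed
  then have "\<forall>z\<in>UNIV. (\<Sum>v\<in>Ls k. t z v) = 0"
    by (subst sum_nonneg_eq_0_iff[symmetric]) (auto intro: sum_nonneg t_nn)
  then have "t z v = 0" using v t_nn by (simp add: sum_nonneg_eq_0_iff)
  then show ?thesis unfolding t_def
    by (intro term_eq[OF nn mult_nonneg_nonneg[OF nn Mw_nonneg] cond]) simp_all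
qed

end

lemma sum_UNIV_pair: "(\<Sum>z\<in>(UNIV::('a::finite \<times> 'b::finite) set). F z) = (\<Sum>x\<in>UNIV. \<Sum>y\<in>UNIV. F (x,y))"
  unfolding sum.cartesian_product UNIV_Times_UNIV by (simp add: case_prod_eta)

definition comb :: "('a\<times>'b) list \<Rightarrow> 'b list \<Rightarrow> 'a list \<Rightarrow> ('a\<times>'b) list" where
  "comb u a b = zip (map fst u @ b) (a @ map snd u)"

lemma comb_maps:
  assumes "length a = length b"
  shows "map fst (comb u a b) = map fst u @ b" "map snd (comb u a b) = a @ map snd u"
  using assms by (simp_all add: comb_def)

lemma sum_comb:
  fixes g :: "('a::finite \<times> 'b::finite) list \<Rightarrow> 'c::comm_monoid_add"
  shows "(\<Sum>v\<in>Ls (n+T). g v) = (\<Sum>u\<in>Ls n. \<Sum>a\<in>Ls T. \<Sum>b\<in>Ls T. g (comb u a b))"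
proof -
  let ?f = "\<lambda>x::('a\<times>'b) list \<times> 'b list \<times> 'a list. comb (fst x) (fst (snd x)) (snd (snd x))"
  let ?g = "\<lambda>v::('a\<times>'b) list. (zip (take n (map fst v)) (drop T (map snd v)), take T (map snd v), drop n (map fst v))"
  have bij: "bij_betw ?f (Ls n \<times> (Ls T \<times> Ls T)) (Ls (n+T))"
  proof (rule bij_betw_byWitness[where f'="?g"])
    show "\<forall>x\<in>Ls n \<times> Ls T \<times> Ls T. ?g (?f x) = x"
    proof
      fix x :: "('a\<times>'b) list \<times> 'b list \<times> 'a list" assume x: "x \<in> Ls n \<times> Ls T \<times> Ls T"
      obtain u a b where xe: "x = (u,a,b)" by (cases x) auto
      have l: "length u = n" "length a = T" "length b = T" using x xe by auto
      have m: "map fst (comb u a b) = map fst u @ b" "map snd (comb u a b) = a @ map snd u"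
        using comb_maps[of a b u] l by simp_all
      show "?g (?f x) = x" unfolding xe using l
        by (simp only: fst_conv snd_conv m take_map[symmetric] drop_map[symmetric])
           (simp add: zip_map_fst_snd)
    qed
    show "\<forall>v\<in>Ls (n + T). ?f (?g v) = v"
    proof
      fix v :: "('a\<times>'b) list" assume v: "v \<in> Ls (n+T)"
      have "map fst (zip (take n (map fst v)) (drop T (map snd v))) = take n (map fst v)"
        using v by simp
      moreover have "map snd (zip (take n (map fst v)) (drop T (map snd v))) = drop T (map snd v)"
        using v by simp
      ultimately show "?f (?g v) = v"
        by (simp add: comb_def zip_map_fst_snd del: map_fst_zip map_snd_zip take_map drop_map)
    qed
    show "?f ` (Ls n \<times> Ls T \<times> Ls T) \<subseteq> Ls (n + T)" by (auto simp: comb_def)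
    show "?g ` Ls (n + T) \<subseteq> Ls n \<times> Ls T \<times> Ls T" by auto
  qed
  have "(\<Sum>v\<in>Ls (n+T). g v) = (\<Sum>x\<in>Ls n \<times> (Ls T \<times> Ls T). g (?f x))"
    using sum.reindex_bij_betw[OF bij, of g] by simp
  also have "\<dots> = (\<Sum>u\<in>Ls n. \<Sum>a\<in>Ls T. \<Sum>b\<in>Ls T. g (comb u a b))"
    unfolding sum.cartesian_product by (simp add: split_def)
  finally show ?thesis .
qed

lemma comb_fst: "k < length u \<Longrightarrow> length a = length b \<Longrightarrow> fst (comb u a b ! k) = fst (u ! k)"
proof -
  assume h: "k < length u" "length a = length b"
  have "fst (comb u a b ! k) = map fst (comb u a b) ! k" using h by (simp add: comb_def)
  also have "\<dots> = fst (u ! k)" using h by (simp add: comb_maps nth_append)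
  finally show ?thesis .
qed

lemma comb_snd: "k < length u \<Longrightarrow> length a = T \<Longrightarrow> length b = T \<Longrightarrow> snd (comb u a b ! (T + k)) = snd (u ! k)"
proof -
  assume h: "k < length u" "length a = T" "length b = T"
  have "snd (comb u a b ! (T+k)) = map snd (comb u a b) ! (T+k)" using h by (simp add: comb_def)
  also have "\<dots> = snd (u ! k)" using h by (simp add: comb_maps nth_append)
  finally show ?thesis .
qed


locale tilt =
  fixes P Q :: "'e::finite \<Rightarrow> 'e \<Rightarrow> real" and f :: "'e \<times> 'e \<Rightarrow> int" and \<theta> :: real
    and r :: "'e \<times> 'e \<Rightarrow> real" and pis :: "'e \<times> 'e \<Rightarrow> real" and T :: nat
  assumes P_st: "stochastic P" and Q_st: "stochastic Q"
    and r_pos: "\<And>z. r z > 0"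
    and r_eig: "\<And>z. (\<Sum>z'\<in>UNIV. Phi P Q f \<theta> z z' * r z') = r z"
    and pis_inv: "invariant_prob (doob (Phi P Q f \<theta>) r) pis"
begin

definition R :: "'e \<times> 'e \<Rightarrow> 'e \<times> 'e \<Rightarrow> real" where "R = doob (Phi P Q f \<theta>) r"

lemma R_eq: "R z z' = r z' / r z * (exp (\<theta> * of_int (f z')) * P (fst z) (fst z') * Q (snd z) (snd z'))"
  by (cases z; cases z') (simp add: R_def doob_def Phi_def)

lemma P_nn: "0 \<le> P x x'" and Q_nn: "0 \<le> Q y y'"
  using P_st Q_st by (auto simp: stochastic_def)

lemma R_nn: "0 \<le> R z z'"
  unfolding R_eq using r_pos[of z] r_pos[of z'] P_nn Q_nn by simp

lemma R_row: "(\<Sum>z'\<in>UNIV. R z z') = 1"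
proof -
  have "(\<Sum>z'\<in>UNIV. R z z') = (\<Sum>z'\<in>UNIV. Phi P Q f \<theta> z z' * r z') / r z"
    by (simp add: R_def doob_def sum_divide_distrib algebra_simps)
  also have "\<dots> = 1" using r_eig[of z] r_pos[of z] by simp
  finally show ?thesis .
qed

lemma R_pos_iff: "0 < R z z' \<longleftrightarrow> 0 < P (fst z) (fst z') \<and> 0 < Q (snd z) (snd z')"
proof -
  have "0 < r z' / r z * exp (\<theta> * of_int (f z'))" using r_pos[of z] r_pos[of z'] by simp
  then show ?thesis unfolding R_eq using P_nn[of "fst z" "fst z'"] Q_nn[of "snd z" "snd z'"]
    by (simp add: zero_less_mult_iff mult.assoc[symmetric] del: times_divide_eq_left)
qed

sublocale stoch R by (rule stoch.intro) (simp_all add: R_nn R_row)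

lemma pis_nn: "0 \<le> pis z"
  using pis_inv unfolding invariant_prob_def by blast
lemma pis_sum: "(\<Sum>z\<in>UNIV. pis z) = 1"
  using pis_inv unfolding invariant_prob_def by blast
lemma pis_inv': "(\<Sum>z\<in>UNIV. pis z * R z z') = pis z'"
  using pis_inv unfolding invariant_prob_def R_def by blast

definition rho :: "('e \<times> 'e) list \<Rightarrow> real" where
  "rho w = (case w of [] \<Rightarrow> 1 | z # _ \<Rightarrow> pis z * Mw R w)"

lemma rho_Cons: "rho (z # v) = pis z * Mw R (z # v)" by (simp add: rho_def)

lemma rho_ne: "w \<noteq> [] \<Longrightarrow> rho w = pis (hd w) * Mw R w" by (cases w) (simp_all add: rho_def)

lemma proc_rho: "proc rho"
  unfolding proc_def
proof (intro conjI allI)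
  show "rho [] = 1" by (simp add: rho_def)
next
  fix w :: "('e\<times>'e) list"
  show "0 \<le> rho w" by (cases w) (auto simp: rho_def pis_nn Mw_nonneg)
next
  fix w :: "('e\<times>'e) list"
  show "(\<Sum>z\<in>UNIV. rho (w @ [z])) = rho w"
  proof (cases w rule: rev_cases)
    case Nil then show ?thesis by (simp add: rho_def pis_sum)
  next
    case (snoc u z0)
    have "rho (w @ [z]) = rho w * R z0 z" for z
    proof -
      have hh: "hd (u @ [z0, z]) = hd (u @ [z0])" by (cases u) simp_all
      have "rho (w @ [z]) = pis (hd (u @ [z0])) * Mw R (u @ [z0, z])"
        unfolding snoc by (subst rho_ne) (simp_all add: hh)
      also have "\<dots> = pis (hd (u @ [z0])) * Mw R (u @ [z0]) * R z0 z"
        by (simp add: Mw_snoc)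
      also have "\<dots> = rho w * R z0 z" unfolding snoc by (subst rho_ne) simp_all
      finally show ?thesis .
    qed
    then show ?thesis by (simp add: sum_distrib_left[symmetric] R_row)
  qed
next
  fix w :: "('e\<times>'e) list"
  show "(\<Sum>z\<in>UNIV. rho (z # w)) = rho w"
  proof (cases w)
    case Nil then show ?thesis by (simp add: rho_def pis_sum)
  next
    case (Cons z' v)
    have "(\<Sum>z\<in>UNIV. rho (z # w)) = (\<Sum>z\<in>UNIV. pis z * R z z') * Mw R (z' # v)"
      unfolding Cons by (simp add: rho_def sum_distrib_right mult.assoc)
    then show ?thesis using pis_inv'[of z'] by (simp add: rho_def Cons)
  qed
qed

lemma okp_rho: "okp rho"
  unfolding okp_def
proof (intro conjI allI impI proc_rho)
  fix w assume h: "0 < rho w"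
  show "0 < Mw R w"
  proof (cases w)
    case (Cons z v)
    then have "0 < pis z * Mw R w" using h by (simp add: rho_def)
    then show ?thesis using pis_nn[of z] Mw_nonneg[of w] by (simp add: zero_less_mult_iff)
  qed simp
qed

lemma Ec_rho: "Ec rho k = 0"
  unfolding Ec_def
proof (rule sum.neutral, rule ballI)
  fix w :: "('e\<times>'e) list" assume "w \<in> Ls (Suc k)"
  then obtain z v where w: "w = z # v" by (cases w) auto
  have "rho [hd w] = pis z" by (simp add: rho_def w)
  then show "rho w * ln (rho w / (rho [hd w] * Mw R w)) = 0"
    by (cases "rho w = 0") (auto simp: w rho_def)
qed

definition sig :: "('e \<times> 'e) list \<Rightarrow> real" where
  "sig u = (\<Sum>a\<in>Ls T. \<Sum>b\<in>Ls T. rho (comb u a b))"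

lemma Ls_Suc_two: "(\<Sum>x\<in>UNIV. \<Sum>b\<in>Ls n. g (x#b)) = (\<Sum>b\<in>Ls n. \<Sum>x\<in>UNIV. g (b@[x]))"
  for g :: "'a::finite list \<Rightarrow> real"
  using sum_Ls_Suc_cons[of g n] sum_Ls_Suc_snoc[of g n] by simp

lemma sig_end: "(\<Sum>z\<in>UNIV. sig (u @ [z])) = sig u"
proof -
  define U where "U = map fst u"
  define Y where "Y = map snd u"
  have lUY: "length U = length Y" by (simp add: U_def Y_def)
  define G where "G a y x b = rho (zip (U @ x # b) (a @ Y @ [y]))" for a :: "'e list" and y :: 'e and x :: 'e and b :: "'e list"
  have "(\<Sum>z\<in>UNIV. sig (u @ [z])) = (\<Sum>x\<in>UNIV. \<Sum>y\<in>UNIV. \<Sum>a\<in>Ls T. \<Sum>b\<in>Ls T. G a y x b)"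
    by (simp add: sum_UNIV_pair sig_def comb_def G_def U_def Y_def)
  also have "\<dots> = (\<Sum>x\<in>UNIV. \<Sum>a\<in>Ls T. \<Sum>y\<in>UNIV. \<Sum>b\<in>Ls T. G a y x b)"
    by (rule sum.cong[OF refl], rule sum.swap)
  also have "\<dots> = (\<Sum>a\<in>Ls T. \<Sum>x\<in>UNIV. \<Sum>y\<in>UNIV. \<Sum>b\<in>Ls T. G a y x b)"
    by (rule sum.swap)
  also have "\<dots> = (\<Sum>a\<in>Ls T. \<Sum>y\<in>UNIV. \<Sum>x\<in>UNIV. \<Sum>b\<in>Ls T. G a y x b)"
    by (rule sum.cong[OF refl], rule sum.swap)
  also have "\<dots> = (\<Sum>a\<in>Ls T. \<Sum>y\<in>UNIV. \<Sum>b\<in>Ls T. \<Sum>x\<in>UNIV. rho (zip (U @ b @ [x]) (a @ Y @ [y])))"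
  proof (intro sum.cong refl)
    fix a :: "'e list" and y :: 'e
    show "(\<Sum>x\<in>UNIV. \<Sum>b\<in>Ls T. G a y x b) = (\<Sum>b\<in>Ls T. \<Sum>x\<in>UNIV. rho (zip (U @ b @ [x]) (a @ Y @ [y])))"
      unfolding G_def using Ls_Suc_two[of "\<lambda>c. rho (zip (U @ c) (a @ Y @ [y]))" T] by simp
  qed
  also have "\<dots> = (\<Sum>a\<in>Ls T. \<Sum>b\<in>Ls T. \<Sum>x\<in>UNIV. \<Sum>y\<in>UNIV. rho (zip (U @ b) (a @ Y) @ [(x,y)]))"
  proof (rule sum.cong[OF refl])
    fix a :: "'e list" assume a: "a \<in> Ls T"
    have "(\<Sum>y\<in>UNIV. \<Sum>b\<in>Ls T. \<Sum>x\<in>UNIV. rho (zip (U @ b @ [x]) (a @ Y @ [y])))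
        = (\<Sum>b\<in>Ls T. \<Sum>x\<in>UNIV. \<Sum>y\<in>UNIV. rho (zip (U @ b @ [x]) (a @ Y @ [y])))"
      by (subst sum.swap) (rule sum.cong[OF refl], rule sum.swap)
    also have "\<dots> = (\<Sum>b\<in>Ls T. \<Sum>x\<in>UNIV. \<Sum>y\<in>UNIV. rho (zip (U @ b) (a @ Y) @ [(x,y)]))"
    proof (intro sum.cong refl)
      fix b :: "'e list" and x y :: 'e assume b: "b \<in> Ls T"
      have "zip (U @ b @ [x]) (a @ Y @ [y]) = zip ((U @ b) @ [x]) ((a @ Y) @ [y])" by simp
      also have "\<dots> = zip (U @ b) (a @ Y) @ zip [x] [y]"
        by (rule zip_append) (use a b lUY in simp)
      finally show "rho (zip (U @ b @ [x]) (a @ Y @ [y])) = rho (zip (U @ b) (a @ Y) @ [(x,y)])" by simp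
    qed
    finally show "(\<Sum>y\<in>UNIV. \<Sum>b\<in>Ls T. \<Sum>x\<in>UNIV. rho (zip (U @ b @ [x]) (a @ Y @ [y])))
        = (\<Sum>b\<in>Ls T. \<Sum>x\<in>UNIV. \<Sum>y\<in>UNIV. rho (zip (U @ b) (a @ Y) @ [(x,y)]))" .
  qed
  also have "\<dots> = (\<Sum>a\<in>Ls T. \<Sum>b\<in>Ls T. rho (zip (U @ b) (a @ Y)))"
  proof (intro sum.cong refl)
    fix a b
    have "(\<Sum>z\<in>UNIV. rho (zip (U @ b) (a @ Y) @ [z])) = rho (zip (U @ b) (a @ Y))"
      using proc_rho unfolding proc_def by blast
    then show "(\<Sum>x\<in>UNIV. \<Sum>y\<in>UNIV. rho (zip (U @ b) (a @ Y) @ [(x,y)])) = rho (zip (U @ b) (a @ Y))"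
      by (simp add: sum_UNIV_pair)
  qed
  also have "\<dots> = sig u" by (simp add: sig_def comb_def U_def Y_def)
  finally show ?thesis .
qed

lemma sig_front: "(\<Sum>z\<in>UNIV. sig (z # u)) = sig u"
proof -
  define U where "U = map fst u"
  define Y where "Y = map snd u"
  have lUY: "length U = length Y" by (simp add: U_def Y_def)
  define G where "G x a y b = rho (zip (x # U @ b) (a @ y # Y))" for x :: 'e and a :: "'e list" and y :: 'e and b :: "'e list"
  have "(\<Sum>z\<in>UNIV. sig (z # u)) = (\<Sum>x\<in>UNIV. \<Sum>y\<in>UNIV. \<Sum>a\<in>Ls T. \<Sum>b\<in>Ls T. G x a y b)"
    by (simp add: sum_UNIV_pair sig_def comb_def G_def U_def Y_def)
  also have "\<dots> = (\<Sum>x\<in>UNIV. \<Sum>a\<in>Ls T. \<Sum>y\<in>UNIV. \<Sum>b\<in>Ls T. G x a y b)"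
    by (rule sum.cong[OF refl], rule sum.swap)
  also have "\<dots> = (\<Sum>x\<in>UNIV. \<Sum>b\<in>Ls T. \<Sum>a\<in>Ls T. \<Sum>y\<in>UNIV. G x a y b)"
  proof (rule sum.cong[OF refl])
    fix x
    have "(\<Sum>a\<in>Ls T. \<Sum>y\<in>UNIV. \<Sum>b\<in>Ls T. G x a y b) = (\<Sum>a\<in>Ls T. \<Sum>b\<in>Ls T. \<Sum>y\<in>UNIV. G x a y b)"
      by (rule sum.cong[OF refl], rule sum.swap)
    also have "\<dots> = (\<Sum>b\<in>Ls T. \<Sum>a\<in>Ls T. \<Sum>y\<in>UNIV. G x a y b)" by (rule sum.swap)
    finally show "(\<Sum>a\<in>Ls T. \<Sum>y\<in>UNIV. \<Sum>b\<in>Ls T. G x a y b) = (\<Sum>b\<in>Ls T. \<Sum>a\<in>Ls T. \<Sum>y\<in>UNIV. G x a y b)" .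
  qed
  also have "\<dots> = (\<Sum>x\<in>UNIV. \<Sum>b\<in>Ls T. \<Sum>y\<in>UNIV. \<Sum>a\<in>Ls T. rho ((x,y) # zip (U @ b) (a @ Y)))"
  proof (intro sum.cong refl)
    fix x :: 'e and b :: "'e list" assume b: "b \<in> Ls T"
    have "(\<Sum>a\<in>Ls T. \<Sum>y\<in>UNIV. G x a y b) = (\<Sum>y\<in>UNIV. \<Sum>a\<in>Ls T. rho (zip (x # U @ b) (y # a @ Y)))"
      unfolding G_def using Ls_Suc_two[of "\<lambda>c. rho (zip (x # U @ b) (c @ Y))" T] by simp
    then show "(\<Sum>a\<in>Ls T. \<Sum>y\<in>UNIV. G x a y b) = (\<Sum>y\<in>UNIV. \<Sum>a\<in>Ls T. rho ((x,y) # zip (U @ b) (a @ Y)))"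
      by simp
  qed
  also have "\<dots> = (\<Sum>b\<in>Ls T. \<Sum>a\<in>Ls T. \<Sum>x\<in>UNIV. \<Sum>y\<in>UNIV. rho ((x,y) # zip (U @ b) (a @ Y)))"
  proof -
    have "(\<Sum>x\<in>UNIV. \<Sum>b\<in>Ls T. \<Sum>y\<in>UNIV. \<Sum>a\<in>Ls T. rho ((x,y) # zip (U @ b) (a @ Y)))
        = (\<Sum>b\<in>Ls T. \<Sum>x\<in>UNIV. \<Sum>y\<in>UNIV. \<Sum>a\<in>Ls T. rho ((x,y) # zip (U @ b) (a @ Y)))"
      by (rule sum.swap)
    also have "\<dots> = (\<Sum>b\<in>Ls T. \<Sum>x\<in>UNIV. \<Sum>a\<in>Ls T. \<Sum>y\<in>UNIV. rho ((x,y) # zip (U @ b) (a @ Y)))"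
      by (intro sum.cong refl) (rule sum.swap)
    also have "\<dots> = (\<Sum>b\<in>Ls T. \<Sum>a\<in>Ls T. \<Sum>x\<in>UNIV. \<Sum>y\<in>UNIV. rho ((x,y) # zip (U @ b) (a @ Y)))"
      by (intro sum.cong refl) (rule sum.swap)
    finally show ?thesis .
  qed
  also have "\<dots> = (\<Sum>b\<in>Ls T. \<Sum>a\<in>Ls T. rho (zip (U @ b) (a @ Y)))"
  proof (intro sum.cong refl)
    fix a b
    have "(\<Sum>z\<in>UNIV. rho (z # zip (U @ b) (a @ Y))) = rho (zip (U @ b) (a @ Y))"
      using proc_rho unfolding proc_def by blast
    then show "(\<Sum>x\<in>UNIV. \<Sum>y\<in>UNIV. rho ((x,y) # zip (U @ b) (a @ Y))) = rho (zip (U @ b) (a @ Y))"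
      by (simp add: sum_UNIV_pair)
  qed
  also have "\<dots> = sig u" by (subst sum.swap) (simp add: sig_def comb_def U_def Y_def)
  finally show ?thesis .
qed

lemma sum_comb0: "(\<Sum>a\<in>Ls T. \<Sum>b\<in>Ls T. g (comb [] a b)) = (\<Sum>v\<in>Ls T. g v)"
  for g :: "('e \<times> 'e) list \<Rightarrow> real"
proof -
  have e: "Ls 0 = {[]}" by (auto simp: Ls_def)
  show ?thesis using sum_comb[of g 0 T] unfolding e by simp
qed

lemma proc_sig: "proc sig"
  unfolding proc_def
proof (intro conjI allI)
  show "sig [] = 1" unfolding sig_def sum_comb0 by (rule proc_total[OF proc_rho])
  show "(\<Sum>z\<in>UNIV. sig (w @ [z])) = sig w" for w by (rule sig_end)
  show "(\<Sum>z\<in>UNIV. sig (z # w)) = sig w" for w by (rule sig_front)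
  show "0 \<le> sig w" for w unfolding sig_def by (intro sum_nonneg proc_nonneg[OF proc_rho])
qed

lemma sum_pos_ex: "0 < sum g A \<Longrightarrow> \<exists>x\<in>A. 0 < (g x :: real)"
  by (meson not_le sum_nonpos)

lemma Mw_pos_iff: "0 < Mw R w \<longleftrightarrow> (\<forall>k. Suc k < length w \<longrightarrow> 0 < R (w!k) (w!Suc k))"
proof (induction w rule: induct_list012)
  case (3 z z' v)
  have "0 < Mw R (z # z' # v) \<longleftrightarrow> 0 < R z z' \<and> 0 < Mw R (z' # v)"
    using R_nn[of z z'] Mw_nonneg[of "z'#v"] by (auto simp: zero_less_mult_iff)
  also have "\<dots> \<longleftrightarrow> (\<forall>k. Suc k < length (z#z'#v) \<longrightarrow> 0 < R ((z#z'#v)!k) ((z#z'#v)!Suc k))"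
    unfolding 3(2)
  proof (intro iffI allI impI)
    fix k assume h: "0 < R z z' \<and> (\<forall>k. Suc k < length (z' # v) \<longrightarrow> 0 < R ((z' # v) ! k) ((z' # v) ! Suc k))"
      and k: "Suc k < length (z # z' # v)"
    then show "0 < R ((z # z' # v) ! k) ((z # z' # v) ! Suc k)" by (cases k) auto
  next
    assume h: "\<forall>k. Suc k < length (z # z' # v) \<longrightarrow> 0 < R ((z # z' # v) ! k) ((z # z' # v) ! Suc k)"
    show "0 < R z z' \<and> (\<forall>k. Suc k < length (z' # v) \<longrightarrow> 0 < R ((z' # v) ! k) ((z' # v) ! Suc k))"
    proof (intro conjI allI impI)
      show "0 < R z z'" using h[rule_format, of 0] by simp
      fix k assume "Suc k < length (z' # v)"
      then show "0 < R ((z' # v) ! k) ((z' # v) ! Suc k)" using h[rule_format, of "Suc k"] by simp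
    qed
  qed
  finally show ?case .
qed simp_all

lemma okp_sig: "okp sig"
  unfolding okp_def
proof (intro conjI allI impI proc_sig)
  fix u assume h: "0 < sig u"
  obtain a b where ab: "a \<in> Ls T" "b \<in> Ls T" "0 < rho (comb u a b)"
  proof -
    from h obtain a where "a \<in> Ls T" "0 < (\<Sum>b\<in>Ls T. rho (comb u a b))"
      unfolding sig_def using sum_pos_ex by blast
    moreover from this obtain b where "b \<in> Ls T" "0 < rho (comb u a b)"
      using sum_pos_ex by blast
    ultimately show ?thesis using that by blast
  qed
  define v where "v = comb u a b"
  have lv: "length v = length u + T" using ab by (simp add: v_def comb_def)
  have Mv: "0 < Mw R v" using okp_rho ab(3) by (simp add: okp_def v_def)
  show "0 < Mw R u"
    unfolding Mw_pos_iff R_pos_iff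
  proof (intro allI impI conjI)
    fix k assume k: "Suc k < length u"
    have "0 < R (v!k) (v!Suc k)" using Mv k lv unfolding Mw_pos_iff by simp
    then have "0 < P (fst (v!k)) (fst (v!Suc k))" by (simp add: R_pos_iff)
    then show "0 < P (fst (u!k)) (fst (u!Suc k))"
      using comb_fst[of k u a b] comb_fst[of "Suc k" u a b] k ab by (simp add: v_def)
    have "0 < R (v!(T+k)) (v!Suc (T+k))" using Mv k lv unfolding Mw_pos_iff by simp
    then have "0 < Q (snd (v!(T+k))) (snd (v!(T+Suc k)))" by (simp add: R_pos_iff)
    then show "0 < Q (snd (u!k)) (snd (u!Suc k))"
      using comb_snd[of k u a T b] comb_snd[of "Suc k" u a T b] k ab by (simp add: v_def)
  qed
qed

lemma sig_expect:
  assumes "\<And>u a b. u \<in> Ls n \<Longrightarrow> a \<in> Ls T \<Longrightarrow> b \<in> Ls T \<Longrightarrow> H u = H' (comb u a b)"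
  shows "(\<Sum>u\<in>Ls n. sig u * H u) = (\<Sum>v\<in>Ls (n+T). rho v * H' v)"
proof -
  have "(\<Sum>u\<in>Ls n. sig u * H u) = (\<Sum>u\<in>Ls n. \<Sum>a\<in>Ls T. \<Sum>b\<in>Ls T. rho (comb u a b) * H u)"
    by (simp add: sig_def sum_distrib_right)
  also have "\<dots> = (\<Sum>u\<in>Ls n. \<Sum>a\<in>Ls T. \<Sum>b\<in>Ls T. rho (comb u a b) * H' (comb u a b))"
  proof (intro sum.cong refl)
    fix u :: "('e\<times>'e) list" and a b :: "'e list" assume "u \<in> Ls n" "a \<in> Ls T" "b \<in> Ls T"
    then have "H u = H' (comb u a b)" by (rule assms)
    then show "rho (comb u a b) * H u = rho (comb u a b) * H' (comb u a b)" by simp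
  qed
  also have "\<dots> = (\<Sum>v\<in>Ls (n+T). rho v * H' v)" by (rule sum_comb[symmetric])
  finally show ?thesis .
qed

lemma sum_Ls_2: "(\<Sum>u\<in>Ls 2. g u) = (\<Sum>z\<in>UNIV. \<Sum>z'\<in>UNIV. g [z,z'])"
  for g :: "('e\<times>'e) list \<Rightarrow> real"
proof -
  have e: "Ls 0 = {[]}" by (auto simp: Ls_def)
  have "(2::nat) = Suc (Suc 0)" by simp
  then show ?thesis by (simp only: sum_Ls_Suc_cons e) simp
qed

lemma XP_eq: "(\<Sum>z\<in>UNIV. \<Sum>z'\<in>UNIV. sig [z,z'] * h (fst z) (fst z'))
    = (\<Sum>z\<in>UNIV. \<Sum>z'\<in>UNIV. rho [z,z'] * h (fst z) (fst z'))"
proof -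
  have "(\<Sum>z\<in>UNIV. \<Sum>z'\<in>UNIV. sig [z,z'] * h (fst z) (fst z'))
      = (\<Sum>u\<in>Ls 2. sig u * h (fst (u!0)) (fst (u!1)))" by (simp add: sum_Ls_2)
  also have "\<dots> = (\<Sum>v\<in>Ls (2+T). rho v * h (fst (v!0)) (fst (v!1)))"
    by (rule sig_expect) (simp add: comb_fst)
  also have "\<dots> = (\<Sum>v\<in>Ls (0+2+T). rho v * (\<lambda>w. h (fst (w!0)) (fst (w!1))) (take 2 (drop 0 v)))"
    by (intro sum.cong refl) (auto simp: nth_take)
  also have "\<dots> = (\<Sum>u\<in>Ls 2. rho u * h (fst (u!0)) (fst (u!1)))"
    by (rule proc_window[OF proc_rho])
  also have "\<dots> = (\<Sum>z\<in>UNIV. \<Sum>z'\<in>UNIV. rho [z,z'] * h (fst z) (fst z'))" by (simp add: sum_Ls_2)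
  finally show ?thesis .
qed

lemma YQ_eq: "(\<Sum>z\<in>UNIV. \<Sum>z'\<in>UNIV. sig [z,z'] * h (snd z) (snd z'))
    = (\<Sum>z\<in>UNIV. \<Sum>z'\<in>UNIV. rho [z,z'] * h (snd z) (snd z'))"
proof -
  have "(\<Sum>z\<in>UNIV. \<Sum>z'\<in>UNIV. sig [z,z'] * h (snd z) (snd z'))
      = (\<Sum>u\<in>Ls 2. sig u * h (snd (u!0)) (snd (u!1)))" by (simp add: sum_Ls_2)
  also have "\<dots> = (\<Sum>v\<in>Ls (2+T). rho v * h (snd (v!(T+0))) (snd (v!(T+1))))"
  proof (rule sig_expect)
    fix u :: "('e\<times>'e) list" and a b :: "'e list" assume h: "u \<in> Ls 2" "a \<in> Ls T" "b \<in> Ls T"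
    show "h (snd (u!0)) (snd (u!1)) = h (snd (comb u a b ! (T+0))) (snd (comb u a b ! (T+1)))"
    proof -
      have "u \<noteq> []" using h by auto
      then show ?thesis using comb_snd[of 0 u a T b] comb_snd[of 1 u a T b] h by simp
    qed
  qed
  also have "\<dots> = (\<Sum>v\<in>Ls (T+2+0). rho v * (\<lambda>w. h (snd (w!0)) (snd (w!1))) (take 2 (drop T v)))"
    by (intro sum.cong refl) (auto simp: nth_take add.commute)
  also have "\<dots> = (\<Sum>u\<in>Ls 2. rho u * h (snd (u!0)) (snd (u!1)))"
    by (rule proc_window[OF proc_rho])
  also have "\<dots> = (\<Sum>z\<in>UNIV. \<Sum>z'\<in>UNIV. rho [z,z'] * h (snd z) (snd z'))" by (simp add: sum_Ls_2)
  finally show ?thesis .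
qed

end

context tilt begin

definition m1 :: "(('e\<times>'e) list \<Rightarrow> real) \<Rightarrow> real" where "m1 p = (\<Sum>z\<in>UNIV. p [z] * of_int (f z))"
definition XP :: "(('e\<times>'e) list \<Rightarrow> real) \<Rightarrow> real" where
  "XP p = (\<Sum>z\<in>UNIV. \<Sum>z'\<in>UNIV. p [z,z'] * ln (P (fst z) (fst z')))"
definition YQ :: "(('e\<times>'e) list \<Rightarrow> real) \<Rightarrow> real" where
  "YQ p = (\<Sum>z\<in>UNIV. \<Sum>z'\<in>UNIV. p [z,z'] * ln (Q (snd z) (snd z')))"

lemma eR_decomp:
  assumes p: "okp p"
  shows "eR p = \<theta> * m1 p + XP p + YQ p"
proof -
  have pp: "proc p" using p by (simp add: okp_def)
  have trm: "p [z,z'] * ln (R z z') = p [z,z'] * ln (r z') - p [z,z'] * ln (r z)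
      + \<theta> * (p [z,z'] * of_int (f z')) + p [z,z'] * ln (P (fst z) (fst z')) + p [z,z'] * ln (Q (snd z) (snd z'))"
    for z z'
  proof (cases "p [z,z'] = 0")
    case False
    then have "0 < p [z,z']" using proc_nonneg[OF pp, of "[z,z']"] by simp
    then have "0 < Mw R [z,z']" using p unfolding okp_def by blast
    then have "0 < R z z'" by simp
    then have PQ: "0 < P (fst z) (fst z')" "0 < Q (snd z) (snd z')" by (simp_all add: R_pos_iff)
    have rz: "0 < r z" "0 < r z'" using r_pos by auto
    have "ln (R z z') = ln (r z') - ln (r z) + \<theta> * of_int (f z') + ln (P (fst z) (fst z')) + ln (Q (snd z) (snd z'))"
      unfolding R_eq using PQ rz by (simp add: ln_mult_pos ln_div)
    then have "p [z,z'] * ln (R z z') = p [z,z'] * (ln (r z') - ln (r z) + \<theta> * of_int (f z') + ln (P (fst z) (fst z')) + ln (Q (snd z) (snd z')))"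
      by (simp only:)
    then show ?thesis by (simp add: algebra_simps)
  qed simp
  have m_end: "(\<Sum>z'\<in>UNIV. p [z,z']) = p [z]" for z
  proof -
    have "(\<Sum>z'\<in>UNIV. p ([z]@[z'])) = p [z]" using pp unfolding proc_def by blast
    then show ?thesis by simp
  qed
  have m_front: "(\<Sum>z\<in>UNIV. p [z,z']) = p [z']" for z' using pp unfolding proc_def by blast
  have A: "(\<Sum>z\<in>UNIV. \<Sum>z'\<in>UNIV. p [z,z'] * ln (r z')) = (\<Sum>z'\<in>UNIV. p [z'] * ln (r z'))"
    by (subst sum.swap) (simp add: sum_distrib_right[symmetric] m_front)
  have B: "(\<Sum>z\<in>UNIV. \<Sum>z'\<in>UNIV. p [z,z'] * ln (r z)) = (\<Sum>z\<in>UNIV. p [z] * ln (r z))"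
    by (simp add: sum_distrib_right[symmetric] m_end)
  have C: "(\<Sum>z\<in>UNIV. \<Sum>z'\<in>UNIV. p [z,z'] * of_int (f z')) = m1 p"
    unfolding m1_def by (subst sum.swap) (simp add: sum_distrib_right[symmetric] m_front)
  have "eR p = (\<Sum>z\<in>UNIV. \<Sum>z'\<in>UNIV. p [z,z'] * ln (r z')) - (\<Sum>z\<in>UNIV. \<Sum>z'\<in>UNIV. p [z,z'] * ln (r z))
      + \<theta> * (\<Sum>z\<in>UNIV. \<Sum>z'\<in>UNIV. p [z,z'] * of_int (f z')) + XP p + YQ p"
    unfolding eR_def trm XP_def YQ_def
    by (simp only: sum.distrib sum_subtractf sum_distrib_left[symmetric])
  then show ?thesis using A B C by simp
qed

lemma eR_diff: "eR rho - eR sig = \<theta> * (m1 rho - m1 sig)"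
proof -
  have "XP sig = XP rho" unfolding XP_def by (rule XP_eq)
  moreover have "YQ sig = YQ rho" unfolding YQ_def by (rule YQ_eq)
  ultimately show ?thesis using eR_decomp[OF okp_rho] eR_decomp[OF okp_sig] by (simp add: algebra_simps)
qed

lemma sum_triple: "(\<Sum>u\<in>A. \<Sum>a\<in>B. \<Sum>b\<in>C. F u a b) = (\<Sum>i\<in>A \<times> (B \<times> C). F (fst i) (fst (snd i)) (snd (snd i)))"
  unfolding sum.cartesian_product by (simp add: split_def)

lemma sig_ge: "a \<in> Ls T \<Longrightarrow> b \<in> Ls T \<Longrightarrow> rho (comb u a b) \<le> sig u"
proof -
  assume a: "a \<in> Ls T" and b: "b \<in> Ls T"
  have "rho (comb u a b) \<le> (\<Sum>b\<in>Ls T. rho (comb u a b))"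
    by (rule member_le_sum[OF b]) (auto intro: proc_nonneg[OF proc_rho])
  also have "\<dots> \<le> (\<Sum>a\<in>Ls T. \<Sum>b\<in>Ls T. rho (comb u a b))"
    by (rule member_le_sum[OF a, where f="\<lambda>a. \<Sum>b\<in>Ls T. rho (comb u a b)"])
       (auto intro!: sum_nonneg proc_nonneg[OF proc_rho])
  finally show ?thesis by (simp add: sig_def)
qed

lemma entropy_proj: "Hn sig n \<le> Hn rho (n+T) + 2 * real T * ln (real (card (UNIV::'e set)))"
proof -
  define K where "K = real (card (UNIV::'e set))"
  have K: "0 < K" by (simp add: K_def finite_UNIV_card_ge_0)
  define I where "I = (Ls n :: ('e\<times>'e) list set) \<times> ((Ls T :: 'e list set) \<times> (Ls T :: 'e list set))"
  define A where "A i = rho (comb (fst i) (fst (snd i)) (snd (snd i)))" for i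
  define B where "B i = sig (fst i)" for i :: "('e\<times>'e) list \<times> 'e list \<times> 'e list"
  have finI: "finite I" by (simp add: I_def)
  have sA: "(\<Sum>i\<in>I. A i) = 1"
  proof -
    have "(\<Sum>i\<in>I. A i) = (\<Sum>v\<in>Ls (n+T). rho v)"
      unfolding I_def A_def sum_comb sum_triple ..
    also have "\<dots> = 1" by (rule proc_total[OF proc_rho])
    finally show ?thesis .
  qed
  have sB: "(\<Sum>i\<in>I. B i) = K ^ (2*T)"
  proof -
    have "(\<Sum>i\<in>I. B i) = (\<Sum>u\<in>Ls n. \<Sum>a\<in>(Ls T :: 'e list set). \<Sum>b\<in>(Ls T :: 'e list set). sig u)"
      unfolding I_def B_def sum_triple by (rule refl)
    also have "\<dots> = (\<Sum>u\<in>Ls n. sig u) * (real (card (Ls T :: 'e list set)) * real (card (Ls T :: 'e list set)))"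
      by (simp add: sum_distrib_left algebra_simps)
    also have "\<dots> = K ^ (2*T)"
      by (simp add: proc_total[OF proc_sig] card_Ls K_def power_mult power2_eq_square[symmetric] power_mult_distrib[symmetric] mult.commute)
    finally show ?thesis .
  qed
  have ls: "(\<Sum>i\<in>I. A i) * ln ((\<Sum>i\<in>I. A i) / (\<Sum>i\<in>I. B i)) \<le> (\<Sum>i\<in>I. A i * ln (A i / B i))"
  proof (rule log_sum[OF finI])
    fix i assume i: "i \<in> I"
    show "0 \<le> A i" unfolding A_def by (rule proc_nonneg[OF proc_rho])
    show "0 \<le> B i" unfolding B_def by (rule proc_nonneg[OF proc_sig])
    assume "0 < A i"
    moreover have "A i \<le> B i" using i unfolding A_def B_def I_def by (auto intro: sig_ge)
    ultimately show "0 < B i" by simp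
  qed
  have eq: "(\<Sum>i\<in>I. A i * ln (A i / B i)) = Hn rho (n+T) - Hn sig n"
  proof -
    have t: "A i * ln (A i / B i) = A i * ln (A i) - A i * ln (B i)" if i: "i \<in> I" for i
    proof (cases "A i = 0")
      case False
      then have "0 < A i" using proc_nonneg[OF proc_rho] unfolding A_def by (simp add: order_less_le)
      moreover have "A i \<le> B i" using i unfolding A_def B_def I_def by (auto intro: sig_ge)
      ultimately show ?thesis by (simp add: ln_div algebra_simps)
    qed simp
    have h1: "(\<Sum>i\<in>I. A i * ln (A i)) = Hn rho (n+T)"
      unfolding Hn_def I_def A_def sum_comb sum_triple ..
    have h2: "(\<Sum>i\<in>I. A i * ln (B i)) = Hn sig n"
    proof -
      have "(\<Sum>i\<in>I. A i * ln (B i)) = (\<Sum>u\<in>Ls n. \<Sum>a\<in>Ls T. \<Sum>b\<in>Ls T. rho (comb u a b) * ln (sig u))"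
        unfolding I_def A_def B_def sum_triple ..
      also have "\<dots> = Hn sig n" by (simp add: Hn_def sig_def sum_distrib_right)
      finally show ?thesis .
    qed
    show ?thesis using h1 h2 t by (simp add: sum_subtractf)
  qed
  have "ln (1 / K ^ (2*T)) = - (2 * real T * ln K)" using K by (simp add: ln_div ln_realpow)
  then show ?thesis using ls eq sA sB unfolding K_def by simp
qed

lemma Ec_sig_bound: "Ec sig k \<le> real k * (eR rho - eR sig)
   + (Hn rho (Suc 0) + real T * eR rho + 2 * real T * ln (real (card (UNIV::'e set))) - Hn sig (Suc 0))"
proof -
  have r: "Hn rho (Suc (k+T)) = Hn rho (Suc 0) + real (k+T) * eR rho"
    using Ec_eq[OF okp_rho, of "k+T"] Ec_rho[of "k+T"] by simp
  have "Hn sig (Suc k) \<le> Hn rho (Suc k + T) + 2 * real T * ln (real (card (UNIV::'e set)))"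
    by (rule entropy_proj)
  then show ?thesis using Ec_eq[OF okp_sig, of k] r by (simp add: algebra_simps)
qed

lemma markov_sig:
  assumes th: "0 \<le> \<theta>" and mm: "m1 rho \<le> m1 sig"
  shows "sig (z#v) = sig [z] * Mw R (z#v)"
proof -
  define C where "C = Hn rho (Suc 0) + real T * eR rho + 2 * real T * ln (real (card (UNIV::'e set))) - Hn sig (Suc 0)"
  have "eR rho - eR sig \<le> 0" using eR_diff th mm by (simp add: mult_nonneg_nonpos)
  then have "Ec sig k \<le> C" for k
    using Ec_sig_bound[of k] unfolding C_def by (smt (verit) mult_nonneg_nonpos of_nat_0_le_iff)
  then have "Ec sig (length v) \<le> 0" by (intro Ec_bounded_nonpos[OF okp_sig])
  then show ?thesis by (rule Ec_markov[OF okp_sig]) simp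
qed

end

lemma semigroup_eventually:
  fixes S :: "nat set"
  assumes add: "\<And>a b. a \<in> S \<Longrightarrow> b \<in> S \<Longrightarrow> a + b \<in> S" and pos: "0 \<notin> S" and g: "Gcd S = 1"
  shows "\<exists>N. \<forall>n\<ge>N. n \<in> S"
proof -
  define S0 where "S0 = insert 0 S"
  have add0: "a \<in> S0 \<Longrightarrow> b \<in> S0 \<Longrightarrow> a + b \<in> S0" for a b using add by (auto simp: S0_def)
  define D where "D = {int a - int b | a b. a \<in> S0 \<and> b \<in> S0}"
  have D0: "0 \<in> D" unfolding D_def S0_def
    by (rule CollectI, rule exI[of _ 0], rule exI[of _ 0]) simp
  have Dadd: "x + y \<in> D" if "x \<in> D" "y \<in> D" for x y
  proof -
    from that obtain a1 b1 a2 b2 where h: "x = int a1 - int b1" "y = int a2 - int b2"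
      "a1 \<in> S0" "b1 \<in> S0" "a2 \<in> S0" "b2 \<in> S0" unfolding D_def by blast
    then have "x + y = int (a1 + a2) - int (b1 + b2)" by simp
    then show ?thesis unfolding D_def using h add0 by blast
  qed
  have Dneg: "- x \<in> D" if "x \<in> D" for x
  proof -
    from that obtain a b where h: "x = int a - int b" "a \<in> S0" "b \<in> S0" unfolding D_def by blast
    then have "-x = int b - int a" by simp
    then show ?thesis unfolding D_def using h by blast
  qed
  have Dmult: "int k * x \<in> D" if "x \<in> D" for k x
  proof (induction k)
    case 0 then show ?case using D0 by simp
  next
    case (Suc k)
    have "int (Suc k) * x = int k * x + x" by (simp add: algebra_simps)
    then show ?case using Dadd[OF Suc that] by simp
  qed
  have "S \<noteq> {}" using g by auto
  then obtain a0 where a0: "a0 \<in> S" by blast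
  then have a0pos: "0 < a0" using pos by (cases a0) auto
  have "int a0 \<in> D" unfolding D_def S0_def using a0
    by (intro CollectI exI[of _ a0] exI[of _ 0]) simp
  define d where "d = (LEAST n. 0 < n \<and> int n \<in> D)"
  have dD: "0 < d \<and> int d \<in> D" unfolding d_def by (rule LeastI[of _ a0]) (use a0pos \<open>int a0 \<in> D\<close> in simp)
  have dmin: "\<not> (0 < n \<and> int n \<in> D)" if "n < d" for n
    using not_less_Least[of n "\<lambda>n. 0 < n \<and> int n \<in> D"] that unfolding d_def by blast
  have ddvd: "d dvd a" if a: "a \<in> S" for a
  proof -
    have aD: "int a \<in> D" unfolding D_def S0_def using a
      by (intro CollectI exI[of _ a] exI[of _ 0]) simp
    have "int a = int (a div d * d + a mod d)" by simp
    then have "int a = int (a div d) * int d + int (a mod d)" by (simp only: of_nat_add of_nat_mult)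
    then have eq: "int (a mod d) = int a + int (a div d) * (- int d)" by (simp add: algebra_simps)
    have mem: "int a + int (a div d) * (- int d) \<in> D" by (rule Dadd[OF aD Dmult[OF Dneg[OF conjunct2[OF dD]]]])
    have "int (a mod d) \<in> D" unfolding eq by (rule mem)
    moreover have "a mod d < d" using dD by simp
    ultimately have "a mod d = 0" using dmin[of "a mod d"] by auto
    then show ?thesis by (simp add: dvd_eq_mod_eq_0)
  qed
  then have "d dvd Gcd S" by (intro Gcd_greatest) auto
  then have d1: "d = 1" using g by simp
  have "int 1 \<in> D" using dD d1 by simp
  then obtain p q where pq: "int 1 = int p - int q" "p \<in> S0" "q \<in> S0" unfolding D_def by blast
  then have pq': "p = q + 1" by linarith
  have mults: "k * x \<in> S" if "1 \<le> k" "x \<in> S" for k x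
    using that(1)
  proof (induction k rule: dec_induct)
    case base then show ?case using that(2) by simp
  next
    case (step k)
    then show ?case using add[OF step.IH that(2)] by (simp add: algebra_simps)
  qed
  show ?thesis
  proof (cases "q = 0")
    case True
    then have "1 \<in> S" using pq' pq(2) by (simp add: S0_def)
    then show ?thesis using mults[of _ 1] by (intro exI[of _ 1]) auto
  next
    case False
    then have qS: "q \<in> S" and pS: "q + 1 \<in> S" using pq pq' by (auto simp: S0_def)
    have "n \<in> S" if n: "q * q \<le> n" for n
    proof -
      define a where "a = n div q"
      define b where "b = n mod q"
      have q0: "0 < q" using False by simp
      have "q \<le> a" unfolding a_def using n q0 by (simp add: less_eq_div_iff_mult_less_eq)
      moreover have "b < q" unfolding b_def using q0 by simp
      ultimately have ba: "b < a" by simp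
      have e1: "(a - b) * q + b * q = a * q"
      proof -
        have "(a - b) * q = a * q - b * q" by (simp add: diff_mult_distrib)
        moreover have "b * q \<le> a * q" using ba by simp
        ultimately show ?thesis by simp
      qed
      have e2: "n = a * q + b" unfolding a_def b_def by simp
      have neq: "n = (a - b) * q + b * (q + 1)" using e1 e2 by (simp add: algebra_simps)
      have s1: "(a - b) * q \<in> S" using ba qS by (intro mults) auto
      show ?thesis
      proof (cases "b = 0")
        case True then show ?thesis using neq s1 by simp
      next
        case False
        then have "b * (q+1) \<in> S" using pS by (intro mults) auto
        then show ?thesis using neq add[OF s1] by simp
      qed
    qed
    then show ?thesis by blast
  qed
qed

lemma matpow_nonneg: "(\<And>x y. 0 \<le> A x y) \<Longrightarrow> 0 \<le> matpow A n x y"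
  by (induction n arbitrary: y) (auto intro!: sum_nonneg mult_nonneg_nonneg)

lemma matpow_add: "matpow A (a + b) x z = (\<Sum>y\<in>UNIV. matpow A a x y * matpow A b y z)"
proof (induction b arbitrary: z)
  case 0
  have "(\<Sum>y\<in>UNIV. matpow A a x y * (if y = z then 1 else 0)) = matpow A a x z"
    by (simp add: if_distrib[of "\<lambda>t. _ * t"] cong: if_cong)
  then show ?case by simp
next
  case (Suc b)
  have "matpow A (a + Suc b) x z = (\<Sum>y\<in>UNIV. matpow A (a+b) x y * A y z)" by simp
  also have "\<dots> = (\<Sum>y\<in>UNIV. \<Sum>w\<in>UNIV. matpow A a x w * matpow A b w y * A y z)"
    by (simp add: Suc sum_distrib_right)
  also have "\<dots> = (\<Sum>w\<in>UNIV. \<Sum>y\<in>UNIV. matpow A a x w * matpow A b w y * A y z)"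
    by (rule sum.swap)
  also have "\<dots> = (\<Sum>w\<in>UNIV. matpow A a x w * matpow A (Suc b) w z)"
    by (simp add: sum_distrib_left mult.assoc)
  finally show ?case .
qed

lemma matpow_pos_add:
  assumes nn: "\<And>x y. 0 \<le> A x y" and p1: "0 < matpow A a x y" and p2: "0 < matpow A b y z"
  shows "0 < matpow A (a + b) x z"
proof -
  have "matpow A a x y * matpow A b y z \<le> (\<Sum>w\<in>UNIV. matpow A a x w * matpow A b w z)"
    by (rule member_le_sum) (auto intro: mult_nonneg_nonneg matpow_nonneg nn)
  moreover have "0 < matpow A a x y * matpow A b y z" using p1 p2 by simp
  ultimately show ?thesis by (simp add: matpow_add)
qed

lemma eventually_pos:
  fixes A :: "'s::finite \<Rightarrow> 's \<Rightarrow> real"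
  assumes st: "stochastic A" and irr: "irreducible_mat A" and ap: "aperiodic_mat A"
  shows "\<exists>N. \<forall>n\<ge>N. \<forall>x y. 0 < matpow A n x y"
proof -
  have nn: "\<And>x y. 0 \<le> A x y" using st by (simp add: stochastic_def)
  have "\<exists>N. \<forall>n\<ge>N. 0 < matpow A n x x" for x
  proof -
    define S where "S = {n::nat. n \<ge> 1 \<and> 0 < matpow A n x x}"
    have "\<exists>N. \<forall>n\<ge>N. n \<in> S"
    proof (rule semigroup_eventually)
      show "a + b \<in> S" if "a \<in> S" "b \<in> S" for a b
        using that matpow_pos_add[OF nn, where a=a and b=b and x=x and y=x and z=x] by (simp add: S_def)
      show "0 \<notin> S" by (simp add: S_def)
      show "Gcd S = 1" using ap unfolding aperiodic_mat_def S_def by blast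
    qed
    then show ?thesis by (auto simp: S_def)
  qed
  then obtain Nf where Nf: "\<And>x n. Nf x \<le> n \<Longrightarrow> 0 < matpow A n x x" by metis
  have "\<exists>m\<ge>1. 0 < matpow A m x y" for x y using irr by (simp add: irreducible_mat_def)
  then obtain mf where mf: "\<And>x y. 0 < matpow A (mf x y) x y" by metis
  define N where "N = (\<Sum>x\<in>UNIV. Nf x) + (\<Sum>x\<in>UNIV. \<Sum>y\<in>UNIV. mf x y)"
  have "0 < matpow A n x y" if n: "N \<le> n" for n x y
  proof -
    have "Nf x \<le> (\<Sum>x\<in>UNIV. Nf x)" by (rule member_le_sum) auto
    moreover have "mf x y \<le> (\<Sum>y\<in>UNIV. mf x y)" by (rule member_le_sum) auto
    moreover have "(\<Sum>y\<in>UNIV. mf x y) \<le> (\<Sum>x\<in>UNIV. \<Sum>y\<in>UNIV. mf x y)"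
      by (rule member_le_sum[where f="\<lambda>x. \<Sum>y\<in>UNIV. mf x y"]) auto
    ultimately have le: "Nf x + mf x y \<le> n" using n unfolding N_def by linarith
    have "0 < matpow A ((n - mf x y) + mf x y) x y"
      by (rule matpow_pos_add[OF nn Nf mf]) (use le in simp)
    then show ?thesis using le by simp
  qed
  then show ?thesis by blast
qed


lemma prod_lessThan_add: "(\<Prod>k<a+b. h k) = (\<Prod>k<a. h k) * (\<Prod>k<b. h (a+k))"
  for h :: "nat \<Rightarrow> real"
  by (induction b) (simp_all add: mult.assoc)

lemma periodic_shift:
  fixes g :: "nat \<Rightarrow> 'a" assumes per: "\<And>k. g (k + L) = g k"
  shows "g (k + j * L) = g k"
proof (induction j)
  case (Suc j)
  have "g (k + Suc j * L) = g ((k + j * L) + L)" by (simp add: algebra_simps)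
  also have "\<dots> = g (k + j * L)" by (rule per)
  finally show ?case using Suc.IH by simp
qed simp

lemma prod_periodic:
  fixes h :: "nat \<Rightarrow> real" assumes per: "\<And>k. h (k + L) = h k"
  shows "(\<Prod>k<j*L + c. h k) = (\<Prod>k<L. h k) ^ j * (\<Prod>k<c. h k)"
proof (induction j)
  case 0 then show ?case by simp
next
  case (Suc j)
  have "(\<Prod>k<Suc j * L + c. h k) = (\<Prod>k<L. h k) * (\<Prod>k<j*L+c. h (L+k))"
    using prod_lessThan_add[of h L "j*L+c"] by (simp add: add.assoc)
  also have "(\<Prod>k<j*L+c. h (L+k)) = (\<Prod>k<j*L+c. h k)" using per by (simp add: add.commute)
  finally show ?case using Suc by simp
qed

lemma prod_shift_periodic:
  fixes h :: "nat \<Rightarrow> real" assumes per: "\<And>k. h (k + L) = h k" and pos: "\<And>k. 0 < h k"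
  shows "(\<Prod>k<L. h (s + k)) = (\<Prod>k<L. h k)"
proof -
  have e1: "(\<Prod>k<s+L. h k) = (\<Prod>k<s. h k) * (\<Prod>k<L. h (s+k))" by (rule prod_lessThan_add)
  have e2: "(\<Prod>k<L+s. h k) = (\<Prod>k<L. h k) * (\<Prod>k<s. h (L+k))" by (rule prod_lessThan_add)
  have e3: "(\<Prod>k<s. h (L+k)) = (\<Prod>k<s. h k)" using per by (simp add: add.commute)
  have ne: "(\<Prod>k<s. h k) \<noteq> 0" using pos by (simp add: prod_pos less_imp_neq[symmetric])
  have "(\<Prod>k<s. h k) * (\<Prod>k<L. h (s+k)) = (\<Prod>k<s+L. h k)" using e1 by (rule sym)
  also have "\<dots> = (\<Prod>k<L+s. h k)" by (simp only: add.commute)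
  also have "\<dots> = (\<Prod>k<L. h k) * (\<Prod>k<s. h k)" using e2 e3 by (simp only:)
  finally have "(\<Prod>k<s. h k) * (\<Prod>k<L. h (s+k)) = (\<Prod>k<s. h k) * (\<Prod>k<L. h k)"
    by (simp only: mult.commute)
  then show ?thesis by (rule mult_left_cancel[OF ne, THEN iffD1])
qed

lemma sum_shift1_periodic:
  fixes h :: "nat \<Rightarrow> int" assumes "h n = h 0"
  shows "(\<Sum>k<n. h (Suc k)) = (\<Sum>k<n. h k)"
proof -
  have "(\<Sum>k<Suc n. h k) = h 0 + (\<Sum>k<n. h (Suc k))" by (rule sum.lessThan_Suc_shift)
  moreover have "(\<Sum>k<Suc n. h k) = (\<Sum>k<n. h k) + h n" by simp
  ultimately show ?thesis using assms by simp
qed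

lemma prod_telescope:
  fixes r :: "nat \<Rightarrow> real" assumes pos: "\<And>k. 0 < r k"
  shows "(\<Prod>k<m. r (Suc k) / r k * c k) = (\<Prod>k<m. c k) * r m / r 0"
proof (induction m)
  case 0 then show ?case using pos[of 0] by simp
next
  case (Suc m)
  have "(\<Prod>k<Suc m. r (Suc k) / r k * c k) = (\<Prod>k<m. r (Suc k) / r k * c k) * (r (Suc m) / r m * c m)"
    by simp
  also have "\<dots> = ((\<Prod>k<m. c k) * r m / r 0) * (r (Suc m) / r m * c m)" using Suc by simp
  also have "\<dots> = ((\<Prod>k<m. c k) * c m) * r (Suc m) / r 0" using pos[of m] by (simp add: field_simps)
  finally show ?case by simp
qed

context tilt begin

lemma matpow_R_pos:
  "0 < matpow P n x x' \<Longrightarrow> 0 < matpow Q n y y' \<Longrightarrow> 0 < matpow R n (x,y) (x',y')"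
proof (induction n arbitrary: x' y')
  case 0 then show ?case by (simp split: if_splits)
next
  case (Suc n)
  have "0 < (\<Sum>w\<in>UNIV. matpow P n x w * P w x')" using Suc.prems(1) by simp
  then obtain w where w: "0 < matpow P n x w * P w x'" using sum_pos_ex by blast
  have "0 < (\<Sum>u\<in>UNIV. matpow Q n y u * Q u y')" using Suc.prems(2) by simp
  then obtain u where u: "0 < matpow Q n y u * Q u y'" using sum_pos_ex by blast
  have Pn: "0 \<le> matpow P n x w" by (rule matpow_nonneg) (rule P_nn)
  have Qn: "0 \<le> matpow Q n y u" by (rule matpow_nonneg) (rule Q_nn)
  have w1: "0 < matpow P n x w" "0 < P w x'" using w Pn P_nn[of w x'] by (auto simp: zero_less_mult_iff)
  have u1: "0 < matpow Q n y u" "0 < Q u y'" using u Qn Q_nn[of u y'] by (auto simp: zero_less_mult_iff)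
  have a: "0 < matpow R n (x,y) (w,u)" using Suc.IH w1(1) u1(1) by blast
  have b: "0 < R (w,u) (x',y')" using w1(2) u1(2) by (simp add: R_pos_iff)
  have "matpow R n (x,y) (w,u) * R (w,u) (x',y') \<le> (\<Sum>v\<in>UNIV. matpow R n (x,y) v * R v (x',y'))"
    by (rule member_le_sum) (auto intro!: mult_nonneg_nonneg matpow_nonneg R_nn)
  moreover have "0 < matpow R n (x,y) (w,u) * R (w,u) (x',y')" using a b by simp
  ultimately show ?case by simp
qed

lemma pis_matpow: "pis z' = (\<Sum>z\<in>UNIV. pis z * matpow R n z z')"
proof (induction n arbitrary: z')
  case 0
  have "(\<Sum>z\<in>UNIV. pis z * (if z = z' then 1 else 0)) = pis z'"
    by (simp add: if_distrib[of "\<lambda>t. _ * t"] cong: if_cong)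
  then show ?case by simp
next
  case (Suc n)
  have "(\<Sum>z\<in>UNIV. pis z * matpow R (Suc n) z z') = (\<Sum>z\<in>UNIV. \<Sum>y\<in>UNIV. pis z * matpow R n z y * R y z')"
    by (simp add: sum_distrib_left mult.assoc)
  also have "\<dots> = (\<Sum>y\<in>UNIV. (\<Sum>z\<in>UNIV. pis z * matpow R n z y) * R y z')"
    by (subst sum.swap) (simp add: sum_distrib_right)
  also have "\<dots> = (\<Sum>y\<in>UNIV. pis y * R y z')" by (simp only: Suc.IH[symmetric])
  also have "\<dots> = pis z'" by (rule pis_inv')
  finally show ?case by simp
qed

lemma pis_pos:
  assumes "irreducible_mat P" "aperiodic_mat P" "irreducible_mat Q" "aperiodic_mat Q"
  shows "0 < pis z"
proof -
  obtain N1 where N1: "\<forall>n\<ge>N1. \<forall>x y. 0 < matpow P n x y" using eventually_pos[OF P_st assms(1,2)] by blast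
  obtain N2 where N2: "\<forall>n\<ge>N2. \<forall>x y. 0 < matpow Q n x y" using eventually_pos[OF Q_st assms(3,4)] by blast
  define N where "N = max N1 N2"
  have RN: "0 < matpow R N z0 z1" for z0 z1
  proof -
    have "0 < matpow P N (fst z0) (fst z1)" "0 < matpow Q N (snd z0) (snd z1)"
      using N1 N2 by (simp_all add: N_def)
    then have "0 < matpow R N (fst z0, snd z0) (fst z1, snd z1)" by (rule matpow_R_pos)
    then show ?thesis by simp
  qed
  obtain z0 where z0: "0 < pis z0"
  proof (rule ccontr)
    assume "\<not> thesis"
    then have "\<forall>z. pis z \<le> 0" using that by (meson not_le)
    then have "(\<Sum>z\<in>UNIV. pis z) \<le> 0" by (intro sum_nonpos) blast
    then show False using pis_sum by simp
  qed
  have "pis z0 * matpow R N z0 z \<le> (\<Sum>y\<in>UNIV. pis y * matpow R N y z)"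
    by (rule member_le_sum) (auto intro!: mult_nonneg_nonneg matpow_nonneg R_nn pis_nn)
  moreover have "0 < pis z0 * matpow R N z0 z" using z0 RN by simp
  ultimately have "0 < (\<Sum>y\<in>UNIV. pis y * matpow R N y z)" by linarith
  then show ?thesis by (simp only: pis_matpow[of z N, symmetric])
qed

end

context tilt begin

lemma Phi_eq: "Phi P Q f \<theta> z z' = exp (\<theta> * of_int (f z')) * P (fst z) (fst z') * Q (snd z) (snd z')"
  by (cases z; cases z') (simp add: Phi_def)

lemma Mw_path: "Mw R (map g [0..<Suc m]) = (\<Prod>k<m. Phi P Q f \<theta> (g k) (g (Suc k))) * r (g m) / r (g 0)"
proof -
  have "Mw R (map g [0..<0 + Suc m]) = (\<Prod>k<m. R (g (0+k)) (g (0 + Suc k)))" by (rule Mw_map_upt)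
  also have "\<dots> = (\<Prod>k<m. r (g (Suc k)) / r (g k) * Phi P Q f \<theta> (g k) (g (Suc k)))"
    by (simp add: R_def doob_def)
  also have "\<dots> = (\<Prod>k<m. Phi P Q f \<theta> (g k) (g (Suc k))) * r (g m) / r (g 0)"
    by (rule prod_telescope[where r="\<lambda>k. r (g k)"]) (simp add: r_pos)
  finally show ?thesis by simp
qed

lemma prod_Phi_split:
  "(\<Prod>k<L. Phi P Q f \<theta> (g k) (g (Suc k)))
   = exp (\<theta> * of_int (\<Sum>k<L. f (g (Suc k)))) * (\<Prod>k<L. P (fst (g k)) (fst (g (Suc k)))) * (\<Prod>k<L. Q (snd (g k)) (snd (g (Suc k))))"
  by (simp add: Phi_eq prod.distrib exp_sum sum_distrib_left)

lemma sig1_le: "sig [z] \<le> 1"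
proof -
  have "sig [z] \<le> (\<Sum>w\<in>Ls (Suc 0). sig w)"
    by (rule member_le_sum) (auto intro: proc_nonneg[OF proc_sig])
  then show ?thesis using proc_total[OF proc_sig, of "Suc 0"] by simp
qed

lemma cycle_le:
  assumes th: "0 < \<theta>" and pp: "\<And>z. 0 < pis z"
    and mk: "\<And>z v. sig (z#v) = sig [z] * Mw R (z#v)"
    and L: "1 \<le> L" and perx: "\<And>k. \<xi> (k+L) = \<xi> k" and pery: "\<And>k. \<eta> (k+L) = \<eta> k"
    and sx: "\<And>k. 0 < P (\<xi> k) (\<xi> (Suc k))" and sy: "\<And>k. 0 < Q (\<eta> k) (\<eta> (Suc k))"
  shows "(\<Sum>k<L. f (\<xi> (Suc k), \<eta> (Suc k))) \<le> (\<Sum>k<L. f (\<xi> (Suc k), \<eta> (Suc k + T)))"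
proof -
  define g0 where "g0 k = (\<xi> k, \<eta> k)" for k
  define gT where "gT k = (\<xi> k, \<eta> (k + T))" for k
  define h0 where "h0 k = Phi P Q f \<theta> (g0 k) (g0 (Suc k))" for k
  define hT where "hT k = Phi P Q f \<theta> (gT k) (gT (Suc k))" for k
  have perg0: "g0 (k + L) = g0 k" for k using perx pery by (simp add: g0_def)
  have pergT: "gT (k + L) = gT k" for k using perx[of k] pery[of "k+T"] by (simp add: gT_def algebra_simps)
  have perh0: "h0 (k + L) = h0 k" for k
    using perg0[of k] perg0[of "Suc k"] by (simp add: h0_def)
  have perhT: "hT (k + L) = hT k" for k
    using pergT[of k] pergT[of "Suc k"] by (simp add: hT_def)
  have h0pos: "0 < h0 k" for k using sx[of k] sy[of k] by (simp add: h0_def Phi_eq g0_def)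
  have hTpos: "0 < hT k" for k using sx[of k] sy[of "k+T"] by (simp add: hT_def Phi_eq gT_def)
  define G0 where "G0 = (\<Prod>k<L. h0 k)"
  define GT where "GT = (\<Prod>k<L. hT k)"
  have G0pos: "0 < G0" unfolding G0_def using h0pos by (simp add: prod_pos)
  have GTpos: "0 < GT" unfolding GT_def using hTpos by (simp add: prod_pos)
  define c where "c = pis (g0 0) * (\<Prod>k<T. h0 k) * r (g0 T) / r (g0 0)"
  have cpos: "0 < c" unfolding c_def using pp[of "g0 0"] h0pos r_pos by (simp add: prod_pos)
  have main: "c * G0 ^ j \<le> GT ^ j" for j
  proof -
    define m where "m = j * L"
    define w where "w = map gT [0..<Suc m]"
    define v where "v = map g0 [0..<Suc (m + T)]"
    define a where "a = map \<eta> [0..<T]"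
    define b where "b = map \<xi> [Suc m..<Suc m + T]"
    have aL: "a \<in> Ls T" and bL: "b \<in> Ls T" by (simp_all add: a_def b_def del: upt_Suc)
    have cv: "comb w a b = v"
    proof (rule nth_equalityI)
      show "length (comb w a b) = length v" by (simp add: comb_def w_def v_def a_def b_def del: upt_Suc)
      fix k assume "k < length (comb w a b)"
      then have k: "k < Suc m + T" by (simp add: comb_def w_def a_def b_def del: upt_Suc)
      have X: "(map fst w @ b) ! k = \<xi> k"
      proof (cases "k < Suc m")
        case True then show ?thesis by (simp add: nth_append w_def gT_def del: upt_Suc)
      next
        case False
        then have i: "k - Suc m < T" using k by simp
        have "(map fst w @ b) ! k = b ! (k - Suc m)" using False by (simp add: nth_append w_def del: upt_Suc)
        also have "\<dots> = \<xi> (Suc m + (k - Suc m))" using i by (simp add: b_def del: upt_Suc)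
        finally show ?thesis using False by simp
      qed
      have Y: "(a @ map snd w) ! k = \<eta> k"
      proof (cases "k < T")
        case True then show ?thesis by (simp add: nth_append a_def)
      next
        case False
        then have "k - T < Suc m" using k by simp
        then show ?thesis using False by (simp add: nth_append a_def w_def gT_def del: upt_Suc)
      qed
      have "comb w a b ! k = ((map fst w @ b) ! k, (a @ map snd w) ! k)"
        unfolding comb_def using k by (simp add: w_def a_def b_def del: upt_Suc)
      also have "\<dots> = v ! k" using X Y k by (simp add: v_def g0_def del: upt_Suc)
      finally show "comb w a b ! k = v ! k" .
    qed
    have wc: "w = gT 0 # tl w" by (simp add: w_def upt_conv_Cons del: upt_Suc)
    have "sig w = sig [gT 0] * Mw R w" using mk[of "gT 0" "tl w"] wc by simp
    also have "Mw R w = GT ^ j"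
    proof -
      have "Mw R w = (\<Prod>k<m. hT k) * r (gT m) / r (gT 0)"
        unfolding w_def Mw_path hT_def ..
      also have "gT m = gT 0" using periodic_shift[of gT L 0 j] pergT by (simp add: m_def)
      also have "(\<Prod>k<m. hT k) = GT ^ j"
        using prod_periodic[of hT L j 0] perhT by (simp add: m_def GT_def)
      finally show ?thesis using r_pos[of "gT 0"] by simp
    qed
    finally have sw: "sig w = sig [gT 0] * GT ^ j" .
    have vc: "v = g0 0 # tl v" by (simp add: v_def upt_conv_Cons del: upt_Suc)
    have "rho v = pis (g0 0) * Mw R v" by (subst vc, subst rho_Cons, subst vc[symmetric]) (rule refl)
    also have "Mw R v = (\<Prod>k<m+T. h0 k) * r (g0 (m+T)) / r (g0 0)"
      unfolding v_def Mw_path h0_def ..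
    also have "(\<Prod>k<m+T. h0 k) = G0 ^ j * (\<Prod>k<T. h0 k)"
      using prod_periodic[of h0 L j T] perh0 by (simp add: m_def G0_def)
    also have "g0 (m+T) = g0 T" using periodic_shift[of g0 L T j] perg0 by (simp add: m_def add.commute)
    finally have rv: "rho v = c * G0 ^ j" by (simp add: c_def)
    have "rho v \<le> sig w" using sig_ge[OF aL bL, of w] cv by simp
    then have "c * G0 ^ j \<le> sig [gT 0] * GT ^ j" using rv sw by simp
    also have "\<dots> \<le> 1 * GT ^ j" using sig1_le GTpos
      by (intro mult_right_mono) (simp_all add: less_imp_le)
    finally show ?thesis by simp
  qed
  have G: "G0 \<le> GT"
  proof (rule ccontr)
    assume "\<not> G0 \<le> GT"
    then have "GT / G0 < 1" using G0pos by simp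
    then obtain j where "(GT / G0) ^ j < c" using real_arch_pow_inv cpos by blast
    then have "GT ^ j < c * G0 ^ j" using G0pos by (simp add: power_divide field_simps)
    then show False using main[of j] by simp
  qed
  have QQ: "(\<Prod>k<L. Q (\<eta> (k + T)) (\<eta> (Suc (k + T)))) = (\<Prod>k<L. Q (\<eta> k) (\<eta> (Suc k)))"
  proof -
    have "(\<Prod>k<L. (\<lambda>k. Q (\<eta> k) (\<eta> (Suc k))) (T + k)) = (\<Prod>k<L. Q (\<eta> k) (\<eta> (Suc k)))"
    proof (rule prod_shift_periodic)
      show "Q (\<eta> (k + L)) (\<eta> (Suc (k + L))) = Q (\<eta> k) (\<eta> (Suc k))" for k
        using pery[of k] pery[of "Suc k"] by simp
      show "0 < Q (\<eta> k) (\<eta> (Suc k))" for k by (rule sy)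
    qed
    then show ?thesis by (simp add: add.commute)
  qed
  define CP where "CP = (\<Prod>k<L. P (\<xi> k) (\<xi> (Suc k))) * (\<Prod>k<L. Q (\<eta> k) (\<eta> (Suc k)))"
  have CPpos: "0 < CP" unfolding CP_def using sx sy by (simp add: prod_pos)
  have G0e: "G0 = exp (\<theta> * of_int (\<Sum>k<L. f (\<xi> (Suc k), \<eta> (Suc k)))) * CP"
    unfolding G0_def h0_def prod_Phi_split CP_def by (simp add: g0_def mult.assoc)
  have GTe: "GT = exp (\<theta> * of_int (\<Sum>k<L. f (\<xi> (Suc k), \<eta> (Suc k + T)))) * CP"
    unfolding GT_def hT_def prod_Phi_split CP_def by (simp add: gT_def mult.assoc QQ)
  have "exp (\<theta> * of_int (\<Sum>k<L. f (\<xi> (Suc k), \<eta> (Suc k)))) \<le> exp (\<theta> * of_int (\<Sum>k<L. f (\<xi> (Suc k), \<eta> (Suc k + T))))"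
    using G CPpos unfolding G0e GTe by simp
  then have "\<theta> * of_int (\<Sum>k<L. f (\<xi> (Suc k), \<eta> (Suc k))) \<le> \<theta> * of_int (\<Sum>k<L. f (\<xi> (Suc k), \<eta> (Suc k + T)))"
    by simp
  then have "real_of_int (\<Sum>k<L. f (\<xi> (Suc k), \<eta> (Suc k))) \<le> of_int (\<Sum>k<L. f (\<xi> (Suc k), \<eta> (Suc k + T)))"
    using th by simp
  then show ?thesis by linarith
qed

end

lemma sum_PiE_list:
  fixes G :: "'s::finite list \<Rightarrow> real"
  shows "(\<Sum>w\<in>PiE {..m} (\<lambda>_. UNIV). G (map w [0..<Suc m])) = (\<Sum>v\<in>Ls (Suc m). G v)"
proof -
  have bij: "bij_betw (\<lambda>w. map w [0..<Suc m]) (PiE {..m} (\<lambda>_. UNIV)) (Ls (Suc m) :: 's list set)"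
  proof (rule bij_betw_byWitness[where f'="\<lambda>v. restrict (\<lambda>i. v ! i) {..m}"])
    show "\<forall>w\<in>PiE {..m} (\<lambda>_. UNIV). restrict (\<lambda>i. map w [0..<Suc m] ! i) {..m} = (w :: nat \<Rightarrow> 's)"
    proof
      fix w :: "nat \<Rightarrow> 's" assume w: "w \<in> PiE {..m} (\<lambda>_. UNIV)"
      show "restrict (\<lambda>i. map w [0..<Suc m] ! i) {..m} = w"
      proof
        fix i show "restrict (\<lambda>i. map w [0..<Suc m] ! i) {..m} i = w i"
        proof (cases "i \<le> m")
          case True
          then have "i < length [0..<Suc m]" by simp
          then show ?thesis using True by (simp del: upt_Suc)
        next
          case False
          then show ?thesis using PiE_arb[OF w, of i] by (simp add: restrict_def)
        qed
      qed
    qed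
    show "\<forall>v\<in>Ls (Suc m). map (restrict (\<lambda>i. v ! i) {..m}) [0..<Suc m] = (v :: 's list)"
    proof
      fix v :: "'s list" assume v: "v \<in> Ls (Suc m)"
      show "map (restrict (\<lambda>i. v ! i) {..m}) [0..<Suc m] = v"
      proof (rule nth_equalityI)
        show "length (map (restrict (\<lambda>i. v ! i) {..m}) [0..<Suc m]) = length v" using v by simp
        fix k assume "k < length (map (restrict (\<lambda>i. v ! i) {..m}) [0..<Suc m])"
        then have k: "k < Suc m" by simp
        then have "map (restrict (\<lambda>i. v ! i) {..m}) [0..<Suc m] ! k = restrict (\<lambda>i. v ! i) {..m} k"
          by (simp del: upt_Suc)
        also have "\<dots> = v ! k" using k by simp
        finally show "map (restrict (\<lambda>i. v ! i) {..m}) [0..<Suc m] ! k = v ! k" .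
      qed
    qed
    show "(\<lambda>w. map w [0..<Suc m]) ` PiE {..m} (\<lambda>_. UNIV) \<subseteq> (Ls (Suc m) :: 's list set)"
      by (auto simp del: upt_Suc)
    show "(\<lambda>v. restrict (\<lambda>i. v ! i) {..m}) ` (Ls (Suc m) :: 's list set) \<subseteq> PiE {..m} (\<lambda>_. UNIV)"
      by (simp add: image_subset_iff restrict_PiE_iff)
  qed
  show ?thesis using sum.reindex_bij_betw[OF bij, of G] by simp
qed

context tilt begin

lemma m1_rho: "m1 rho = (\<Sum>z\<in>UNIV. pis z * of_int (f z))"
  by (simp add: m1_def rho_def)

lemma m1_sig: "m1 sig = (\<Sum>v\<in>Ls (Suc T). rho v * of_int (f (fst (v!0), snd (v!T))))"
proof -
  have "m1 sig = (\<Sum>u\<in>Ls (Suc 0). sig u * of_int (f (u!0)))" by (simp add: m1_def sum_Ls_1)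
  also have "\<dots> = (\<Sum>v\<in>Ls (Suc 0 + T). rho v * of_int (f (fst (v!0), snd (v!T))))"
  proof (rule sig_expect)
    fix u :: "('e\<times>'e) list" and a b :: "'e list" assume h: "u \<in> Ls (Suc 0)" "a \<in> Ls T" "b \<in> Ls T"
    have une: "u \<noteq> []" using h by auto
    have "fst (comb u a b ! 0) = fst (u!0)" using comb_fst[of 0 u a b] h une by simp
    moreover have "snd (comb u a b ! (T+0)) = snd (u!0)" using comb_snd[of 0 u a T b] h une by simp
    ultimately show "real_of_int (f (u!0)) = real_of_int (f (fst (comb u a b ! 0), snd (comb u a b ! T)))"
      by simp
  qed
  finally show ?thesis by simp
qed

lemma me2: "markov_expect2 pis R (1 + T) 1 (1 + T) (\<lambda>z z'. of_int (f (fst z, snd z'))) = m1 sig"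
proof -
  define G where "G v = rho v * of_int (f (fst (v!1), snd (v!(1+T))))" for v :: "('e\<times>'e) list"
  have "markov_expect2 pis R (1 + T) 1 (1 + T) (\<lambda>z z'. of_int (f (fst z, snd z')))
      = (\<Sum>w\<in>PiE {..1+T} (\<lambda>_. UNIV). G (map w [0..<Suc (1+T)]))"
    unfolding markov_expect2_def
  proof (rule sum.cong[OF refl])
    fix w :: "nat \<Rightarrow> 'e\<times>'e"
    have wc: "map w [0..<Suc (1+T)] = w 0 # tl (map w [0..<Suc (1+T)])"
      by (simp add: upt_conv_Cons del: upt_Suc)
    have "rho (map w [0..<Suc (1+T)]) = pis (w 0) * Mw R (map w [0..<0 + Suc (1+T)])"
      by (subst wc, subst rho_Cons, subst wc[symmetric]) simp
    also have "\<dots> = pis (w 0) * (\<Prod>k<1+T. R (w k) (w (Suc k)))" by (simp only: Mw_map_upt) simp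
    finally have r: "rho (map w [0..<Suc (1+T)]) = pis (w 0) * (\<Prod>k<1+T. R (w k) (w (Suc k)))" .
    have n1: "map w [0..<Suc (1+T)] ! 1 = w 1" by (simp del: upt_Suc)
    have n2: "map w [0..<Suc (1+T)] ! (1+T) = w (1+T)" by (simp del: upt_Suc)
    show "pis (w 0) * (\<Prod>k<1 + T. R (w k) (w (Suc k))) * of_int (f (fst (w 1), snd (w (1 + T))))
        = G (map w [0..<Suc (1 + T)])"
      unfolding G_def r n1 n2 ..
  qed
  also have "\<dots> = (\<Sum>v\<in>Ls (Suc (1+T)). G v)" by (rule sum_PiE_list)
  also have "\<dots> = (\<Sum>v\<in>Ls (1+Suc T+0). rho v * (\<lambda>u. of_int (f (fst (u!0), snd (u!T)))) (take (Suc T) (drop 1 v)))"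
    unfolding G_def by (intro sum.cong refl) (auto simp: nth_take)
  also have "\<dots> = (\<Sum>u\<in>Ls (Suc T). rho u * of_int (f (fst (u!0), snd (u!T))))"
    by (rule proc_window[OF proc_rho])
  also have "\<dots> = m1 sig" by (rule m1_sig[symmetric])
  finally show ?thesis .
qed

lemma final_contra:
  assumes th: "0 < \<theta>"
    and irr: "irreducible_mat P" "aperiodic_mat P" "irreducible_mat Q" "aperiodic_mat Q"
    and C2: "\<exists>n x y. is_cycle P n x \<and> is_cycle Q n y \<and>
               (\<Sum>k<n. f (x k, y k)) \<noteq> (\<Sum>k<n. f (x k, y ((k + T) mod n)))"
    and mm: "m1 rho \<le> m1 sig"
  shows False
proof -
  have th0: "0 \<le> \<theta>" using th by simp
  have mk: "\<And>z v. sig (z#v) = sig [z] * Mw R (z#v)" by (rule markov_sig[OF th0 mm])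
  have pp: "\<And>z. 0 < pis z" using pis_pos[OF irr] .
  obtain n x y where cx: "is_cycle P n x" and cy: "is_cycle Q n y"
    and ne: "(\<Sum>k<n. f (x k, y k)) \<noteq> (\<Sum>k<n. f (x k, y ((k + T) mod n)))" using C2 by blast
  have n1: "1 \<le> n" using cx by (simp add: is_cycle_def)
  define S where "S s = (\<Sum>k<n. f (x k, y ((k + s) mod n)))" for s
  have step: "S s \<le> S (s + T)" for s
  proof -
    define \<xi> where "\<xi> k = x (k mod n)" for k
    define \<eta> where "\<eta> k = y ((k + s) mod n)" for k
    have perx: "\<xi> (k+n) = \<xi> k" for k by (simp add: \<xi>_def)
    have pery: "\<eta> (k+n) = \<eta> k" for k
    proof -
      have e: "k + n + s = (k + s) + n" by simp
      show ?thesis unfolding \<eta>_def e mod_add_self2 ..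
    qed
    have sx: "0 < P (\<xi> k) (\<xi> (Suc k))" for k
    proof -
      have "k mod n < n" using n1 by simp
      then have "0 < P (x (k mod n)) (x ((k mod n + 1) mod n))" using cx by (simp add: is_cycle_def)
      then show ?thesis by (simp add: \<xi>_def mod_Suc_eq)
    qed
    have sy: "0 < Q (\<eta> k) (\<eta> (Suc k))" for k
    proof -
      have "(k + s) mod n < n" using n1 by simp
      then have "0 < Q (y ((k + s) mod n)) (y (((k + s) mod n + 1) mod n))" using cy by (simp add: is_cycle_def)
      then show ?thesis by (simp add: \<eta>_def mod_Suc_eq)
    qed
    have cl: "(\<Sum>k<n. f (\<xi> (Suc k), \<eta> (Suc k))) \<le> (\<Sum>k<n. f (\<xi> (Suc k), \<eta> (Suc k + T)))"
      by (rule cycle_le[OF th pp mk n1 perx pery sx sy])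
    have l: "(\<Sum>k<n. f (\<xi> (Suc k), \<eta> (Suc k))) = S s"
    proof -
      have "(\<Sum>k<n. f (\<xi> (Suc k), \<eta> (Suc k))) = (\<Sum>k<n. f (\<xi> k, \<eta> k))"
        by (rule sum_shift1_periodic[where h="\<lambda>k. f (\<xi> k, \<eta> k)"]) (simp add: \<xi>_def \<eta>_def)
      also have "\<dots> = S s" unfolding S_def by (intro sum.cong refl) (simp add: \<xi>_def \<eta>_def)
      finally show ?thesis .
    qed
    have r: "(\<Sum>k<n. f (\<xi> (Suc k), \<eta> (Suc k + T))) = S (s + T)"
    proof -
      have "(\<Sum>k<n. f (\<xi> (Suc k), \<eta> (Suc k + T))) = (\<Sum>k<n. f (\<xi> k, \<eta> (k + T)))"
      proof (rule sum_shift1_periodic[where h="\<lambda>k. f (\<xi> k, \<eta> (k + T))"])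
        have "\<eta> (n + T) = \<eta> (0 + T)" using pery[of T] by (simp add: add.commute)
        then show "f (\<xi> n, \<eta> (n + T)) = f (\<xi> 0, \<eta> (0 + T))" by (simp add: \<xi>_def)
      qed
      also have "\<dots> = S (s + T)" unfolding S_def by (intro sum.cong refl) (simp add: \<xi>_def \<eta>_def algebra_simps)
      finally show ?thesis .
    qed
    show ?thesis using cl l r by simp
  qed
  have iter: "S a \<le> S (a + i * T)" for a i
  proof (induction i)
    case (Suc i)
    have "S (a + i * T) \<le> S (a + i * T + T)" by (rule step)
    then show ?case using Suc by (simp add: algebra_simps)
  qed simp
  have Sper: "S (s + n * T) = S s" for s
    unfolding S_def by (intro sum.cong refl) (simp add: add.assoc[symmetric])
  have "S 0 \<le> S (0 + 1 * T)" by (rule iter)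
  moreover have "S T \<le> S (T + (n - 1) * T)" by (rule iter)
  moreover have "T + (n - 1) * T = 0 + n * T"
  proof -
    obtain n' where "n = Suc n'" using n1 by (cases n) auto
    then show ?thesis by simp
  qed
  ultimately have "S 0 = S T" using Sper[of 0] by simp
  moreover have "S 0 = (\<Sum>k<n. f (x k, y k))" unfolding S_def by (intro sum.cong refl) simp
  moreover have "S T = (\<Sum>k<n. f (x k, y ((k + T) mod n)))" unfolding S_def ..
  ultimately show False using ne by simp
qed

end

theorem lemma5p10:
  fixes P Q :: "'e::finite \<Rightarrow> 'e \<Rightarrow> real"
    and piP piQ :: "'e \<Rightarrow> real"
    and f :: "'e \<times> 'e \<Rightarrow> int"
    and \<theta>s :: real
    and rs :: "'e \<times> 'e \<Rightarrow> real"
    and pis :: "'e \<times> 'e \<Rightarrow> real"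
    and T :: nat
  assumes P: "stochastic P" "irreducible_mat P" "aperiodic_mat P"
    and Q: "stochastic Q" "irreducible_mat Q" "aperiodic_mat Q"
    and piP: "invariant_prob P piP" and piQ: "invariant_prob Q piQ"
    and gcd_f: "Gcd (range f) = 1"
    and mu_neg: "(\<Sum>x\<in>UNIV. \<Sum>y\<in>UNIV. piP x * piQ y * of_int (f (x, y))) < 0"
    and C1: "\<exists>n x y. is_cycle P n x \<and> is_cycle Q n y \<and> (\<Sum>k<n. f (x k, y k)) > 0"
    and C2: "\<forall>T'\<ge>1. \<exists>n x y. is_cycle P n x \<and> is_cycle Q n y \<and>
               (\<Sum>k<n. f (x k, y k)) \<noteq> (\<Sum>k<n. f (x k, y ((k + T') mod n)))"
    and theta: "\<theta>s > 0" "spectral_radius_mat (Phi P Q f \<theta>s) = 1"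
    and rs: "\<forall>z. rs z > 0" "\<forall>z. (\<Sum>z'\<in>UNIV. Phi P Q f \<theta>s z z' * rs z') = rs z"
    and pis: "invariant_prob (doob (Phi P Q f \<theta>s) rs) pis"
    and T: "T \<ge> 1"
  shows "markov_expect2 pis (doob (Phi P Q f \<theta>s) rs) (1 + T) 1 (1 + T)
           (\<lambda>z z'. of_int (f (fst z, snd z')))
         < (\<Sum>z\<in>UNIV. pis z * of_int (f z))"
proof -
  interpret t: tilt P Q f \<theta>s rs pis T
    by unfold_locales (use P Q rs pis in auto)
  have e1: "markov_expect2 pis (doob (Phi P Q f \<theta>s) rs) (1 + T) 1 (1 + T) (\<lambda>z z'. of_int (f (fst z, snd z')))
      = t.m1 t.sig" using t.me2 unfolding t.R_def .
  have e2: "(\<Sum>z\<in>UNIV. pis z * of_int (f z)) = t.m1 t.rho" by (rule t.m1_rho[symmetric])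
  show ?thesis
  proof (rule ccontr)
    assume "\<not> ?thesis"
    then have "t.m1 t.rho \<le> t.m1 t.sig" using e1 e2 by simp
    then show False using t.final_contra[OF theta(1) P(2) P(3) Q(2) Q(3) C2[rule_format, OF T]] by simp
  qed
qed


end
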